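(* Let $K\ge 1$. There is an $\alpha$-approximation algorithm for ring grooming restricted to $K$-quasi-uniform instances, with $\alpha=\max(2K,\,12\sqrt{2K})$: namely, given a $K$-quasi-uniform instance with $d=\max_{j\ne k}d_{jk}$, applying Algorithm A to the uniform instance obtained by replacing every $d_{jk}$ ($j\ne k$) by $d$ yields a feasible routing of the original instance whose number of ADMs is at most $\alpha\, m$, where $m$ is the minimum number of ADMs of the original instance.
   Context: Ring grooming. An instance consists of integers $n\ge 2$ (ring size) and $c\ge 1$ (capacity), and a finite list $L$ of unordered pairs $\{j,k\}$ with $j\ne k$, $j,k\in\{1,\dots,n\}$ (repetitions allowed); these are the traffic demands. Let $d_{jk}=d_{kj}$ be the number of times $\{j,k\}$ occurs in $L$. Let $C_n$ be the cycle graph on vertices $1,\dots,n$ in cyclic order. A solution uses some finite number of "rings", each a copy of $C_n$ with capacity $c$ on every edge. A routing specifies, for every ring $i$ and every pair $j<k$, nonnegative integers $t^0_{ijk},t^1_{ijk}$ (amounts of $\{j,k\}$-traffic on ring $i$ along each of the two arcs of $C_n$ between $j$ and $k$); it is feasible if $\sum_i(t^0_{ijk}+t^1_{ijk})=d_{jk}$ for all $j<k$ and on every ring every edge carries total traffic at most $c$. Ring $i$ needs an ADM at vertex $j$ iff some traffic with endpoint $j$ is routed on ring $i$; the cost is the total number of ADMs, and $m$ is the minimum cost. An instance is $K$-quasi-uniform if $d_{jk}\ge1$ for all $j\ne k$ and $d_{jk}/d_{j'k'}\le K$ for all $j\ne k$, $j'\ne k'$. A feasible routing for the uniform instance restricts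 (by reducing the routed amounts) to a feasible routing of the original instance with no more ADMs. Algorithm A (uniform traffic $d$, $f=d/(2c)$). If $f\ge 1$: for each pair $j<k$, use $\lceil f\rceil$ rings on which only $\{j,k\}$-traffic is routed. If $f<1$: let $M=\lfloor\sqrt{2/f}\rfloor$ if $2\le\lfloor\sqrt{2/f}\rfloor\le n$, $M=2$ if $\lfloor\sqrt{2/f}\rfloor<2$, and $M=n$ if $\lfloor\sqrt{2/f}\rfloor>n$. Let $\mu=\lfloor M/2\rfloor$ and let $F$ be a family of $\lceil n/\mu\rceil$ subsets of $\{1,\dots,n\}$, each of size $\mu$, covering $\{1,\dots,n\}$. For each unordered pair of distinct members of $F$, form a block equal to their union, enlarged if necessary by arbitrary further vertices to exactly $M$ elements (if $F$ has one member, the single block is $\{1,\dots,n\}$); discard duplicates. For each block in turn, create a ring and route on it all not-yet-routed demands between block vertices, $\lfloor d/2\rfloor$ units on the longer arc and $\lceil d/2\rceil$ on the shorter arc. Finally discard ADMs at which no traffic terminates. *)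

theory Defs
  imports Complex_Main
begin

text \<open>Vertices of the ring C_n are 1..n; edge e (1 <= e <= n) joins
  e and (e mod n) + 1. For a pair j < k, arc 0 is the arc j, j+1, ..., k, i.e. it uses
  the edges e with j <= e < k; arc 1 is the complementary arc (the other edges).\<close>

record routing =
  rings :: nat
  tr0 :: "nat \<Rightarrow> nat \<Rightarrow> nat \<Rightarrow> nat"   \<comment> \<open>tr0 R i j k: traffic of pair {j,k} (j<k) on ring i along arc 0\<close>
  tr1 :: "nat \<Rightarrow> nat \<Rightarrow> nat \<Rightarrow> nat"   \<comment> \<open>along arc 1\<close>

definition pairs :: "nat \<Rightarrow> (nat \<times> nat) set" where
  "pairs n = {(j, k). 1 \<le> j \<and> j < k \<and> k \<le> n}"

definition dem :: "(nat \<times> nat) list \<Rightarrow> nat \<Rightarrow> nat \<Rightarrow> nat" where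
  "dem L j k = length (filter (\<lambda>(a, b). {a, b} = {j, k}) L)"

definition valid_instance :: "nat \<Rightarrow> nat \<Rightarrow> (nat \<times> nat) list \<Rightarrow> bool" where
  "valid_instance n c L \<longleftrightarrow> n \<ge> 2 \<and> c \<ge> 1 \<and>
     (\<forall>(a, b) \<in> set L. a \<noteq> b \<and> a \<in> {1..n} \<and> b \<in> {1..n})"

definition load :: "nat \<Rightarrow> routing \<Rightarrow> nat \<Rightarrow> nat \<Rightarrow> nat" where
  "load n R i e = (\<Sum>(j, k) \<in> pairs n. if j \<le> e \<and> e < k then tr0 R i j k else tr1 R i j k)"

definition feasible :: "nat \<Rightarrow> nat \<Rightarrow> (nat \<Rightarrow> nat \<Rightarrow> nat) \<Rightarrow> routing \<Rightarrow> bool" where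
  "feasible n c dm R \<longleftrightarrow>
     (\<forall>(j, k) \<in> pairs n. (\<Sum>i < rings R. tr0 R i j k + tr1 R i j k) = dm j k) \<and>
     (\<forall>i < rings R. \<forall>e \<in> {1..n}. load n R i e \<le> c)"

definition adm :: "nat \<Rightarrow> routing \<Rightarrow> nat \<Rightarrow> nat \<Rightarrow> bool" where
  "adm n R i v \<longleftrightarrow> (\<exists>(j, k) \<in> pairs n. (v = j \<or> v = k) \<and> tr0 R i j k + tr1 R i j k > 0)"

definition cost :: "nat \<Rightarrow> routing \<Rightarrow> nat" where
  "cost n R = (\<Sum>i < rings R. card {v \<in> {1..n}. adm n R i v})"

definition min_cost :: "nat \<Rightarrow> nat \<Rightarrow> (nat \<times> nat) list \<Rightarrow> nat" where
  "min_cost n c L = (LEAST x. \<exists>R. feasible n c (dem L) R \<and> cost n R = x)"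

definition quasi_uniform :: "nat \<Rightarrow> real \<Rightarrow> (nat \<times> nat) list \<Rightarrow> bool" where
  "quasi_uniform n K L \<longleftrightarrow>
     (\<forall>j \<in> {1..n}. \<forall>k \<in> {1..n}. j \<noteq> k \<longrightarrow> dem L j k \<ge> 1) \<and>
     (\<forall>j \<in> {1..n}. \<forall>k \<in> {1..n}. \<forall>j' \<in> {1..n}. \<forall>k' \<in> {1..n}.
        j \<noteq> k \<longrightarrow> j' \<noteq> k' \<longrightarrow> real (dem L j k) / real (dem L j' k') \<le> K)"

definition reduces :: "routing \<Rightarrow> routing \<Rightarrow> bool" where
  "reduces R' R \<longleftrightarrow> rings R' = rings R \<and>
     (\<forall>i j k. tr0 R' i j k \<le> tr0 R i j k \<and> tr1 R' i j k \<le> tr1 R i j k)"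

text \<open>Split of d units of a pair j<k: floor(d/2) on the longer arc, ceil(d/2) on the
  shorter arc (either way if both arcs have equal length).\<close>
definition arc_split :: "nat \<Rightarrow> nat \<Rightarrow> nat \<Rightarrow> nat \<Rightarrow> nat \<Rightarrow> nat \<Rightarrow> bool" where
  "arc_split n d j k a0 a1 \<longleftrightarrow>
     (if k - j > n - (k - j) then a0 = d div 2 \<and> a1 = d - d div 2
      else if k - j < n - (k - j) then a0 = d - d div 2 \<and> a1 = d div 2
      else (a0 = d div 2 \<and> a1 = d - d div 2) \<or> (a0 = d - d div 2 \<and> a1 = d div 2))"

definition algM :: "nat \<Rightarrow> real \<Rightarrow> nat" where
  "algM n f = (let s = \<lfloor>sqrt (2 / f)\<rfloor> in
     if s < 2 then 2 else if s > int n then n else nat s)"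

text \<open>algA n c d R: R is a possible output of Algorithm A on the uniform instance with
  demand d for every pair (all arbitrary choices of the algorithm are quantified).\<close>
definition algA :: "nat \<Rightarrow> nat \<Rightarrow> nat \<Rightarrow> routing \<Rightarrow> bool" where
  "algA n c d R \<longleftrightarrow>
    (let f = real d / (2 * real c) in
     if f \<ge> 1 then
       (let g = nat \<lceil>f\<rceil>; a = (\<lambda>q. min (2 * c) (d - 2 * c * q)) in
        \<exists>ps. distinct ps \<and> set ps = pairs n \<and> rings R = length ps * g \<and>
          (\<forall>i j k. tr0 R i j k =
               (if i < rings R \<and> (j, k) = ps ! (i div g) then a (i mod g) div 2 else 0)) \<and>
          (\<forall>i j k. tr1 R i j k =
               (if i < rings R \<and> (j, k) = ps ! (i div g) then a (i mod g) - a (i mod g) div 2 else 0)))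
     else
       (let M = algM n f; \<mu> = M div 2 in
        \<exists>F E bl.
          finite F \<and> card F = nat \<lceil>real n / real \<mu>\<rceil> \<and>
          (\<forall>A \<in> F. A \<subseteq> {1..n} \<and> card A = \<mu>) \<and> \<Union>F = {1..n} \<and>
          (\<forall>A \<in> F. \<forall>B \<in> F. A \<noteq> B \<longrightarrow>
              A \<union> B \<subseteq> E {A, B} \<and> E {A, B} \<subseteq> {1..n} \<and> card (E {A, B}) = M) \<and>
          distinct bl \<and>
          set bl = (if card F = 1 then {{1..n}}
                    else {E {A, B} | A B. A \<in> F \<and> B \<in> F \<and> A \<noteq> B}) \<and>
          rings R = length bl \<and>
          (\<forall>i j k.
             (if i < rings R \<and> (j, k) \<in> pairs n \<and> j \<in> bl ! i \<and> k \<in> bl ! i \<and>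
                 \<not> (\<exists>i' < i. j \<in> bl ! i' \<and> k \<in> bl ! i')
              then arc_split n d j k (tr0 R i j k) (tr1 R i j k)
              else tr0 R i j k = 0 \<and> tr1 R i j k = 0))))"

end

theory Submission
  imports Defs
begin

lemma sum_reduce:
  fixes x :: "'a \<Rightarrow> nat"
  assumes "finite I" "t \<le> sum x I"
  shows "\<exists>y. (\<forall>a. y a \<le> x a) \<and> sum y I = t"
  using assms
proof (induction I arbitrary: t rule: finite_induct)
  case empty then show ?case by (intro exI[of _ "\<lambda>_. 0"]) auto
next
  case (insert a I)
  show ?case
  proof (cases "t \<le> sum x I")
    case True
    then obtain y where y: "\<forall>a. y a \<le> x a" "sum y I = t" using insert by blast
    show ?thesis using insert y
      by (intro exI[of _ "y(a:=0)"]) (auto intro!: sum.cong)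
  next
    case False
    obtain y where y: "\<forall>a. y a \<le> x a" "sum y I = sum x I" using insert.IH[of "sum x I"] by blast
    have e: "sum (y(a:=t - sum x I)) I = sum y I" using insert(2) by (intro sum.cong) auto
    show ?thesis using insert y False e
      by (intro exI[of _ "y(a:=t - sum x I)"]) auto
  qed
qed

lemma sum_bool_prod:
  "(\<Sum>z\<in>{..<r}\<times>(UNIV::bool set). g z) = (\<Sum>i<r. g (i,True) + g (i,False))"
proof -
  have "(\<Sum>z\<in>{..<r}\<times>(UNIV::bool set). g z) = (\<Sum>i<r. \<Sum>b\<in>(UNIV::bool set). g (i,b))"
    by (simp add: sum.cartesian_product)
  also have "\<dots> = (\<Sum>i<r. g (i,True) + g (i,False))"
    by (simp add: UNIV_bool add.commute)
  finally show ?thesis .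
qed

lemma reduce:
  assumes F: "feasible n c dm R" and le: "\<forall>(j,k)\<in>pairs n. dm' j k \<le> dm j k"
  shows "\<exists>R'. reduces R' R \<and> feasible n c dm' R' \<and> cost n R' \<le> cost n R"
proof -
  define r where "r = rings R"
  define I where "I = {..<r}\<times>(UNIV::bool set)"
  define x where "x j k = (\<lambda>(i,b). if b then tr0 R i j k else tr1 R i j k)" for j k
  have "\<exists>y. (j,k) \<in> pairs n \<longrightarrow> (\<forall>a. y a \<le> x j k a) \<and> sum y I = dm' j k" for j k
  proof (cases "(j,k) \<in> pairs n")
    case True
    have "sum (x j k) I = (\<Sum>i<r. tr0 R i j k + tr1 R i j k)"
      unfolding I_def sum_bool_prod by (simp add: x_def)
    also have "\<dots> = dm j k" using F True unfolding feasible_def r_def by auto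
    finally have "dm' j k \<le> sum (x j k) I" using le True by auto
    then show ?thesis using sum_reduce[of I "dm' j k" "x j k"] unfolding I_def by auto
  qed auto
  then obtain Y where Y: "\<And>j k. (j,k) \<in> pairs n \<Longrightarrow> (\<forall>a. Y j k a \<le> x j k a) \<and> sum (Y j k) I = dm' j k"
    by metis
  define R' where "R' = \<lparr>rings = r,
     tr0 = (\<lambda>i j k. if (j,k)\<in>pairs n \<and> i<r then Y j k (i,True) else 0),
     tr1 = (\<lambda>i j k. if (j,k)\<in>pairs n \<and> i<r then Y j k (i,False) else 0)\<rparr>"
  have t0: "tr0 R' i j k \<le> tr0 R i j k" for i j k
    using Y[of j k] unfolding R'_def x_def by (auto, metis (full_types))
  have t1: "tr1 R' i j k \<le> tr1 R i j k" for i j k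
    using Y[of j k] unfolding R'_def x_def by (auto, metis (full_types))
  have red: "reduces R' R" unfolding reduces_def using t0 t1 by (simp add: R'_def r_def)
  have ld: "load n R' i e \<le> load n R i e" for i e
    unfolding load_def by (rule sum_mono) (use t0 t1 in auto)
  moreover have sums: "(\<Sum>i < rings R'. tr0 R' i j k + tr1 R' i j k) = dm' j k" if "(j,k)\<in>pairs n" for j k
  proof -
    have "(\<Sum>i < rings R'. tr0 R' i j k + tr1 R' i j k) = (\<Sum>i<r. Y j k (i,True) + Y j k (i,False))"
      using that by (simp add: R'_def)
    also have "\<dots> = sum (Y j k) I" unfolding I_def sum_bool_prod ..
    finally show ?thesis using Y[OF that] by simp
  qed
  have rr: "rings R' = rings R" by (simp add: R'_def r_def)
  have "load n R' i e \<le> c" if "i < rings R" "e \<in> {1..n}" for i e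
  proof -
    have "load n R i e \<le> c" using F that unfolding feasible_def by auto
    then show ?thesis using ld[of i e] by linarith
  qed
  then have feas: "feasible n c dm' R'"
    using sums unfolding feasible_def rr by auto
  have admI: "adm n R i v" if A: "adm n R' i v" for i v
  proof -
    obtain j k where jk: "(j,k) \<in> pairs n" "v = j \<or> v = k" "0 < tr0 R' i j k \<or> 0 < tr1 R' i j k"
      using A unfolding adm_def by auto
    have "0 < tr0 R i j k \<or> 0 < tr1 R i j k" using t0[of i j k] t1[of i j k] jk(3) by linarith
    then show ?thesis using jk unfolding adm_def by auto
  qed
  have "cost n R' \<le> cost n R"
    unfolding cost_def
    unfolding rr by (rule sum_mono, rule card_mono) (use admI in auto)
  then show ?thesis using red feas by blast
qed

lemma pairs_mem: "(j,k) \<in> pairs n \<longleftrightarrow> 1 \<le> j \<and> j < k \<and> k \<le> n"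
  by (simp add: pairs_def)

lemma finite_pairs: "finite (pairs n)"
proof -
  have "pairs n \<subseteq> {1..n} \<times> {1..n}" by (auto simp: pairs_def)
  then show ?thesis by (rule finite_subset) auto
qed

lemma count_short0:
  fixes A :: "nat set"
  assumes fin: "finite A"
  shows "card {(j,k)\<in>pairs n. j \<in> A \<and> k \<in> A \<and> card (A \<inter> {u. j \<le> u \<and> u < k}) \<le> H} \<le> card A * H"
proof -
  let ?Q = "{(j,k)\<in>pairs n. j \<in> A \<and> k \<in> A \<and> card (A \<inter> {u. j \<le> u \<and> u < k}) \<le> H}"
  let ?f = "\<lambda>(j,k). (j, card (A \<inter> {u. j \<le> u \<and> u < k}))"
  have inj: "inj_on ?f ?Q"
  proof (rule inj_onI, clarsimp)
    fix j k k'
    assume a: "(j,k) \<in> pairs n" "j \<in> A" "k \<in> A" "(j,k') \<in> pairs n" "k' \<in> A"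
      and eq: "card (A \<inter> {u. j \<le> u \<and> u < k}) = card (A \<inter> {u. j \<le> u \<and> u < k'})"
    show "k = k'"
    proof (rule ccontr)
      assume "k \<noteq> k'"
      then consider "k < k'" | "k' < k" by linarith
      then show False
      proof cases
        case 1
        have "A \<inter> {u. j \<le> u \<and> u < k} \<subseteq> A \<inter> {u. j \<le> u \<and> u < k'}"
          using 1 by auto
        moreover have "k \<in> A \<inter> {u. j \<le> u \<and> u < k'}" using 1 a by (simp add: pairs_def)
        ultimately have "A \<inter> {u. j \<le> u \<and> u < k} \<subset> A \<inter> {u. j \<le> u \<and> u < k'}"
          by blast
        then have "card (A \<inter> {u. j \<le> u \<and> u < k}) < card (A \<inter> {u. j \<le> u \<and> u < k'})"
          using fin by (intro psubset_card_mono) auto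
        then show False using eq by simp
      next
        case 2
        have "A \<inter> {u. j \<le> u \<and> u < k'} \<subseteq> A \<inter> {u. j \<le> u \<and> u < k}"
          using 2 by auto
        moreover have "k' \<in> A \<inter> {u. j \<le> u \<and> u < k}" using 2 a by (simp add: pairs_def)
        ultimately have "A \<inter> {u. j \<le> u \<and> u < k'} \<subset> A \<inter> {u. j \<le> u \<and> u < k}"
          by blast
        then have "card (A \<inter> {u. j \<le> u \<and> u < k'}) < card (A \<inter> {u. j \<le> u \<and> u < k})"
          using fin by (intro psubset_card_mono) auto
        then show False using eq by simp
      qed
    qed
  qed
  have img: "?f ` ?Q \<subseteq> A \<times> {1..H}"
  proof clarsimp
    fix j k assume a: "(j,k) \<in> pairs n" "j \<in> A" "k \<in> A" "card (A \<inter> {u. j \<le> u \<and> u < k}) \<le> H"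
    have "j \<in> A \<inter> {u. j \<le> u \<and> u < k}" using a by (auto simp: pairs_def)
    then have "card (A \<inter> {u. j \<le> u \<and> u < k}) \<noteq> 0" using fin by auto
    then show "Suc 0 \<le> card (A \<inter> {u. j \<le> u \<and> u < k})" by linarith
  qed
  have fB: "finite (A \<times> {1..H})" using fin by simp
  have "card ?Q \<le> card (A \<times> {1..H})"
    using card_inj_on_le[OF inj img fB] .
  then show ?thesis by (simp add: card_cartesian_product)
qed

lemma count_short1:
  fixes A :: "nat set"
  assumes fin: "finite A"
  shows "card {(j,k)\<in>pairs n. j \<in> A \<and> k \<in> A \<and> card (A \<inter> - {u. j \<le> u \<and> u < k}) \<le> H} \<le> card A * H"
proof -
  let ?Q = "{(j,k)\<in>pairs n. j \<in> A \<and> k \<in> A \<and> card (A \<inter> - {u. j \<le> u \<and> u < k}) \<le> H}"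
  let ?f = "\<lambda>(j,k). (k, card (A \<inter> - {u. j \<le> u \<and> u < k}))"
  have inj: "inj_on ?f ?Q"
  proof (rule inj_onI, clarsimp)
    fix j k j'
    assume a: "(j,k) \<in> pairs n" "j \<in> A" "k \<in> A" "(j',k) \<in> pairs n" "j' \<in> A"
      and eq: "card (A \<inter> - {u. j \<le> u \<and> u < k}) = card (A \<inter> - {u. j' \<le> u \<and> u < k})"
    show "j = j'"
    proof (rule ccontr)
      assume "j \<noteq> j'"
      then consider "j < j'" | "j' < j" by linarith
      then show False
      proof cases
        case 1
        have "A \<inter> - {u. j \<le> u \<and> u < k} \<subseteq> A \<inter> - {u. j' \<le> u \<and> u < k}"
          using 1 by auto
        moreover have "j \<in> A \<inter> - {u. j' \<le> u \<and> u < k}" using 1 a(2) by simp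
        moreover have "j \<notin> A \<inter> - {u. j \<le> u \<and> u < k}" using a(1) by (simp add: pairs_def)
        ultimately have "A \<inter> - {u. j \<le> u \<and> u < k} \<subset> A \<inter> - {u. j' \<le> u \<and> u < k}"
          by blast
        then have "card (A \<inter> - {u. j \<le> u \<and> u < k}) < card (A \<inter> - {u. j' \<le> u \<and> u < k})"
          using fin by (intro psubset_card_mono) auto
        then show False using eq by simp
      next
        case 2
        have "A \<inter> - {u. j' \<le> u \<and> u < k} \<subseteq> A \<inter> - {u. j \<le> u \<and> u < k}"
          using 2 by auto
        moreover have "j' \<in> A \<inter> - {u. j \<le> u \<and> u < k}" using 2 a(5) by simp
        moreover have "j' \<notin> A \<inter> - {u. j' \<le> u \<and> u < k}" using a(4) by (simp add: pairs_def)
        ultimately have "A \<inter> - {u. j' \<le> u \<and> u < k} \<subset> A \<inter> - {u. j \<le> u \<and> u < k}"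
          by blast
        then have "card (A \<inter> - {u. j' \<le> u \<and> u < k}) < card (A \<inter> - {u. j \<le> u \<and> u < k})"
          using fin by (intro psubset_card_mono) auto
        then show False using eq by simp
      qed
    qed
  qed
  have img: "?f ` ?Q \<subseteq> A \<times> {1..H}"
  proof clarsimp
    fix j k assume a: "(j,k) \<in> pairs n" "j \<in> A" "k \<in> A" "card (A \<inter> - {u. j \<le> u \<and> u < k}) \<le> H"
    have "k \<in> A \<inter> - {u. j \<le> u \<and> u < k}" using a by (auto simp: pairs_def)
    then have "card (A \<inter> - {u. j \<le> u \<and> u < k}) \<noteq> 0" using fin by auto
    then show "Suc 0 \<le> card (A \<inter> - {u. j \<le> u \<and> u < k})" by linarith
  qed
  have fB: "finite (A \<times> {1..H})" using fin by simp
  have "card ?Q \<le> card (A \<times> {1..H})"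
    using card_inj_on_le[OF inj img fB] .
  then show ?thesis by (simp add: card_cartesian_product)
qed

lemma ring_bound:
  fixes n c D H i :: nat and R :: routing
  assumes ld: "\<forall>e\<in>{1..n}. load n R i e \<le> c"
    and pd: "\<forall>(j,k)\<in>pairs n. tr0 R i j k + tr1 R i j k \<le> D"
  shows "real (\<Sum>(j,k)\<in>pairs n. tr0 R i j k + tr1 R i j k)
     \<le> real (card {v\<in>{1..n}. adm n R i v}) * (2 * real H * real D + real c / (real H + 1))"
proof -
  define A where "A = {v\<in>{1..n}. adm n R i v}"
  have finA: "finite A" by (simp add: A_def)
  define h0 where "h0 j k = card (A \<inter> {u. j \<le> u \<and> u < k})" for j k
  define h1 where "h1 j k = card (A \<inter> - {u. j \<le> u \<and> u < k})" for j k
  define t0 where "t0 j k = tr0 R i j k" for j k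
  define t1 where "t1 j k = tr1 R i j k" for j k
  define Q where "Q = {(j,k)\<in>pairs n. j \<in> A \<and> k \<in> A \<and> (h0 j k \<le> H \<or> h1 j k \<le> H)}"
  have inner: "(\<Sum>u\<in>A. if j \<le> u \<and> u < k then t0 j k else t1 j k) = h0 j k * t0 j k + h1 j k * t1 j k" for j k
    using finA by (simp add: sum.If_cases h0_def h1_def)
  have step1: "(\<Sum>u\<in>A. load n R i u) = (\<Sum>(j,k)\<in>pairs n. h0 j k * t0 j k + h1 j k * t1 j k)"
  proof -
    have "(\<Sum>u\<in>A. load n R i u) = (\<Sum>u\<in>A. \<Sum>(j,k)\<in>pairs n. if j \<le> u \<and> u < k then t0 j k else t1 j k)"
      unfolding load_def t0_def t1_def ..
    also have "\<dots> = (\<Sum>(j,k)\<in>pairs n. \<Sum>u\<in>A. if j \<le> u \<and> u < k then t0 j k else t1 j k)"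
      unfolding case_prod_unfold by (rule sum.swap)
    also have "\<dots> = (\<Sum>(j,k)\<in>pairs n. h0 j k * t0 j k + h1 j k * t1 j k)"
      by (rule sum.cong) (auto simp: inner)
    finally show ?thesis .
  qed
  have step2: "(\<Sum>u\<in>A. load n R i u) \<le> card A * c"
    using sum_bounded_above[of A "load n R i" c] ld by (auto simp: A_def)
  have step3: "real (t0 j k + t1 j k) \<le> (if (j,k) \<in> Q then real D else 0)
      + real (h0 j k * t0 j k + h1 j k * t1 j k) / (real H + 1)" if jk: "(j,k) \<in> pairs n" for j k
  proof (cases "t0 j k + t1 j k = 0")
    case True then show ?thesis by simp
  next
    case False
    then have "adm n R i j" "adm n R i k" unfolding adm_def t0_def t1_def using jk by auto
    moreover have "j \<in> {1..n}" "k \<in> {1..n}" using jk by (auto simp: pairs_def)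
    ultimately have jkA: "j \<in> A" "k \<in> A" by (auto simp: A_def)
    show ?thesis
    proof (cases "h0 j k \<le> H \<or> h1 j k \<le> H")
      case True
      then have "(j,k) \<in> Q" using jk jkA by (simp add: Q_def)
      then have e: "(if (j,k) \<in> Q then real D else 0) = real D" by simp
      have "t0 j k + t1 j k \<le> D" using pd jk by (auto simp: t0_def t1_def)
      then have "real (t0 j k + t1 j k) \<le> real D" by linarith
      moreover have "0 \<le> real (h0 j k * t0 j k + h1 j k * t1 j k) / (real H + 1)" by simp
      ultimately show ?thesis unfolding e by linarith
    next
      case False
      then have "H + 1 \<le> h0 j k" "H + 1 \<le> h1 j k" by auto
      then have "(H+1) * t0 j k \<le> h0 j k * t0 j k" "(H+1) * t1 j k \<le> h1 j k * t1 j k"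
        using mult_right_mono by blast+
      then have "(H+1) * (t0 j k + t1 j k) \<le> h0 j k * t0 j k + h1 j k * t1 j k"
        by (simp add: algebra_simps)
      then have "real (H+1) * real (t0 j k + t1 j k) \<le> real (h0 j k * t0 j k + h1 j k * t1 j k)"
        by (metis of_nat_le_iff of_nat_mult)
      then have "real (t0 j k + t1 j k) \<le> real (h0 j k * t0 j k + h1 j k * t1 j k) / (real H + 1)"
        by (simp add: field_simps)
      then show ?thesis by simp
    qed
  qed
  have QP: "Q \<subseteq> pairs n" by (auto simp: Q_def)
  have step4: "real (\<Sum>(j,k)\<in>pairs n. tr0 R i j k + tr1 R i j k)
      \<le> real D * card Q + real (card A * c) / (real H + 1)"
  proof -
    have "real (\<Sum>(j,k)\<in>pairs n. tr0 R i j k + tr1 R i j k) = (\<Sum>(j,k)\<in>pairs n. real (t0 j k + t1 j k))"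
      by (simp add: of_nat_sum case_prod_unfold t0_def t1_def)
    also have "\<dots> \<le> (\<Sum>(j,k)\<in>pairs n. (if (j,k) \<in> Q then real D else 0)
      + real (h0 j k * t0 j k + h1 j k * t1 j k) / (real H + 1))"
      by (rule sum_mono) (use step3 in auto)
    also have "\<dots> = (\<Sum>p\<in>pairs n. if p \<in> Q then real D else 0)
      + (\<Sum>(j,k)\<in>pairs n. real (h0 j k * t0 j k + h1 j k * t1 j k)) / (real H + 1)"
      by (simp only: sum.distrib sum_divide_distrib case_prod_unfold prod.collapse)
    also have "(\<Sum>p\<in>pairs n. if p \<in> Q then real D else 0) = real D * card Q"
    proof -
      have "(\<Sum>p\<in>pairs n. if p \<in> Q then real D else 0) = (\<Sum>p\<in>pairs n \<inter> Q. real D)"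
        by (rule sum.inter_restrict[symmetric]) (rule finite_pairs)
      also have "pairs n \<inter> Q = Q" using QP by blast
      finally show ?thesis by simp
    qed
    also have "(\<Sum>(j,k)\<in>pairs n. real (h0 j k * t0 j k + h1 j k * t1 j k))
        = real (\<Sum>u\<in>A. load n R i u)"
      unfolding step1 by (simp add: of_nat_sum case_prod_unfold)
    also have "\<dots> \<le> real (card A * c)" using step2 by linarith
    finally show ?thesis by (simp add: divide_right_mono)
  qed
  have step5: "card Q \<le> 2 * card A * H"
  proof -
    have "Q \<subseteq> {(j,k)\<in>pairs n. j \<in> A \<and> k \<in> A \<and> card (A \<inter> {u. j \<le> u \<and> u < k}) \<le> H}
        \<union> {(j,k)\<in>pairs n. j \<in> A \<and> k \<in> A \<and> card (A \<inter> - {u. j \<le> u \<and> u < k}) \<le> H}"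
      by (auto simp: Q_def h0_def h1_def)
    then have "card Q \<le> card ({(j,k)\<in>pairs n. j \<in> A \<and> k \<in> A \<and> card (A \<inter> {u. j \<le> u \<and> u < k}) \<le> H}
        \<union> {(j,k)\<in>pairs n. j \<in> A \<and> k \<in> A \<and> card (A \<inter> - {u. j \<le> u \<and> u < k}) \<le> H})"
      by (rule card_mono[rotated]) (auto intro: finite_subset[OF _ finite_pairs])
    also have "\<dots> \<le> card A * H + card A * H"
      using card_Un_le count_short0[OF finA, of n H] count_short1[OF finA, of n H]
      by (meson add_mono le_trans)
    finally show ?thesis by simp
  qed
  have "real (card Q) \<le> real (2 * card A * H)" using step5 by (simp only: of_nat_le_iff)
  then have "real D * card Q \<le> real D * (2 * card A * H)"
    by (intro mult_left_mono) auto
  then have "real (\<Sum>(j,k)\<in>pairs n. tr0 R i j k + tr1 R i j k)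
      \<le> real D * (2 * card A * H) + real (card A * c) / (real H + 1)" using step4 by linarith
  also have "\<dots> = real (card A) * (2 * real H * real D + real c / (real H + 1))"
    by (simp add: field_simps)
  finally show ?thesis unfolding A_def .
qed

lemma lower_bound:
  fixes H D :: nat
  assumes F: "feasible n c (\<lambda>j k. D) R"
  shows "real (card (pairs n)) * real D
     \<le> real (cost n R) * (2 * real H * real D + real c / (real H + 1))"
proof -
  define X where "X = 2 * real H * real D + real c / (real H + 1)"
  have "card (pairs n) * D = (\<Sum>(j,k)\<in>pairs n. D)" by simp
  also have "\<dots> = (\<Sum>(j,k)\<in>pairs n. \<Sum>i<rings R. tr0 R i j k + tr1 R i j k)"
    by (rule sum.cong) (use F in \<open>auto simp: feasible_def\<close>)
  also have "\<dots> = (\<Sum>i<rings R. \<Sum>(j,k)\<in>pairs n. tr0 R i j k + tr1 R i j k)"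
    unfolding case_prod_unfold by (rule sum.swap)
  finally have eq0: "card (pairs n) * D = (\<Sum>i<rings R. \<Sum>(j,k)\<in>pairs n. tr0 R i j k + tr1 R i j k)" .
  define S where "S i = (\<Sum>(j,k)\<in>pairs n. tr0 R i j k + tr1 R i j k)" for i
  have "real (card (pairs n)) * real D = real (card (pairs n) * D)" by simp
  also have "\<dots> = real (\<Sum>i<rings R. S i)" unfolding eq0 S_def ..
  also have "\<dots> = (\<Sum>i<rings R. real (S i))" by (rule of_nat_sum)
  finally have eq: "real (card (pairs n)) * real D = (\<Sum>i<rings R. real (\<Sum>(j,k)\<in>pairs n. tr0 R i j k + tr1 R i j k))"
    unfolding S_def .
  have "real (\<Sum>(j,k)\<in>pairs n. tr0 R i j k + tr1 R i j k) \<le> real (card {v\<in>{1..n}. adm n R i v}) * X"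
    if i: "i < rings R" for i
  proof -
    have ld: "\<forall>e\<in>{1..n}. load n R i e \<le> c" using F i by (auto simp: feasible_def)
    have pd: "\<forall>(j,k)\<in>pairs n. tr0 R i j k + tr1 R i j k \<le> D"
    proof clarify
      fix j k assume jk: "(j,k) \<in> pairs n"
      have "tr0 R i j k + tr1 R i j k \<le> (\<Sum>i<rings R. tr0 R i j k + tr1 R i j k)"
        by (rule member_le_sum) (use i in auto)
      also have "\<dots> = D" using F jk by (auto simp: feasible_def)
      finally show "tr0 R i j k + tr1 R i j k \<le> D" .
    qed
    show ?thesis unfolding X_def by (rule ring_bound[OF ld pd])
  qed
  then have "(\<Sum>i<rings R. real (\<Sum>(j,k)\<in>pairs n. tr0 R i j k + tr1 R i j k))
      \<le> (\<Sum>i<rings R. real (card {v\<in>{1..n}. adm n R i v}) * X)"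
    by (intro sum_mono) auto
  also have "\<dots> = real (cost n R) * X"
    by (simp add: cost_def sum_distrib_right)
  finally show ?thesis using eq unfolding X_def by simp
qed

lemma lb_H0:
  fixes D :: nat
  assumes F: "feasible n c (\<lambda>j k. D) R"
  shows "real (card (pairs n)) * real D \<le> real (cost n R) * real c"
  using lower_bound[OF F, of 0] by simp

lemma choose_H:
  fixes y :: real
  assumes y: "y > 0"
  shows "\<exists>H::nat. 2 * real H + y^2 / (real H + 1) \<le> 2 * sqrt 2 * y"
proof -
  define t where "t = nat \<lceil>y / sqrt 2\<rceil>"
  have s2: "sqrt 2 > 0" by simp
  have "y / sqrt 2 > 0" using y by simp
  then have t1: "t \<ge> 1" unfolding t_def by linarith
  have cz: "\<lceil>y / sqrt 2\<rceil> \<ge> 0" using \<open>y / sqrt 2 > 0\<close> by simp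
  have rt: "real t = real_of_int \<lceil>y / sqrt 2\<rceil>" unfolding t_def using cz by simp
  have tge: "real t \<ge> y / sqrt 2" unfolding rt by simp
  have tlt: "real t < y / sqrt 2 + 1" unfolding rt using ceiling_correct[of "y / sqrt 2"] by linarith
  define H where "H = t - 1"
  have Ht: "real H + 1 = real t" using t1 unfolding H_def by simp
  have a: "2 * real H < sqrt 2 * y"
  proof -
    have "2 * real H = 2 * real t - 2" using Ht by simp
    also have "\<dots> < 2 * (y / sqrt 2)" using tlt by simp
    also have "2 * (y / sqrt 2) = sqrt 2 * y"
      by (metis mult.commute real_div_sqrt times_divide_eq_right zero_le_numeral)
    finally show ?thesis .
  qed
  have b: "y^2 / real t \<le> sqrt 2 * y"
  proof -
    have tp: "real t > 0" using t1 by simp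
    have "y^2 = (y / sqrt 2) * (sqrt 2 * y)" using s2 by (simp add: power2_eq_square)
    also have "\<dots> \<le> real t * (sqrt 2 * y)" using tge y by (intro mult_right_mono) auto
    finally show ?thesis using tp by (simp add: divide_le_eq mult.commute)
  qed
  show ?thesis
    by (rule exI[of _ H]) (use a b Ht in simp)
qed

lemma lb_sqrt:
  fixes D :: nat
  assumes F: "feasible n c (\<lambda>j k. D) R" and D: "D \<ge> 1" and c: "c \<ge> 1"
  shows "real (card (pairs n)) * real D \<le> real (cost n R) * (2 * sqrt 2 * sqrt (real c * real D))"
proof -
  define y where "y = sqrt (real c / real D)"
  have y: "y > 0" using c D unfolding y_def by simp
  obtain H :: nat where H: "2 * real H + y^2 / (real H + 1) \<le> 2 * sqrt 2 * y"
    using choose_H[OF y] by blast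
  have y2: "y^2 = real c / real D" unfolding y_def using c D by simp
  have Dp: "real D > 0" using D by simp
  have dd: "real D * (real c / real D / (real H + 1)) = real c / (real H + 1)" using Dp by simp
  have "2 * real H * real D + real c / (real H + 1) = real D * (2 * real H + y^2 / (real H + 1))"
    unfolding y2 distrib_left dd by simp
  also have "\<dots> \<le> real D * (2 * sqrt 2 * y)" using H Dp by (intro mult_left_mono) auto
  also have "real D * y = sqrt (real c * real D)"
  proof -
    have "(real D * y)^2 = real D ^ 2 * y^2" by (simp add: power_mult_distrib)
    also have "\<dots> = real c * real D" unfolding y2 using Dp by (simp add: power2_eq_square)
    finally have "(real D * y)^2 = real c * real D" .
    moreover have "0 \<le> real D * y" using y Dp by simp
    ultimately show ?thesis using real_sqrt_unique by metis
  qed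
  then have "real D * (2 * sqrt 2 * y) = 2 * sqrt 2 * sqrt (real c * real D)" by (simp add: algebra_simps)
  finally have X: "2 * real H * real D + real c / (real H + 1) \<le> 2 * sqrt 2 * sqrt (real c * real D)" .
  have "real (card (pairs n)) * real D \<le> real (cost n R) * (2 * real H * real D + real c / (real H + 1))"
    by (rule lower_bound[OF F])
  also have "\<dots> \<le> real (cost n R) * (2 * sqrt 2 * sqrt (real c * real D))"
    using X by (intro mult_left_mono) auto
  finally show ?thesis .
qed

lemma cost_ge_n:
  assumes F: "feasible n c dm R" and n: "n \<ge> 2" and pos: "\<forall>(j,k)\<in>pairs n. dm j k \<ge> 1"
  shows "n \<le> cost n R"
proof -
  have sub: "{1..n} \<subseteq> (\<Union>i<rings R. {v\<in>{1..n}. adm n R i v})"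
  proof
    fix v assume v: "v \<in> {1..n}"
    define j where "j = (1::nat)"
    define k where "k = (if v = 1 then 2 else v)"
    have pp: "(j,k) \<in> pairs n" using v n unfolding j_def k_def pairs_def by auto
    have vp: "v = j \<or> v = k" unfolding j_def k_def by simp
    have s: "(\<Sum>i<rings R. tr0 R i j k + tr1 R i j k) = dm j k"
      using F pp unfolding feasible_def by auto
    have "dm j k \<ge> 1" using pos pp by auto
    have "\<exists>i<rings R. 0 < tr0 R i j k + tr1 R i j k"
    proof (rule ccontr)
      assume "\<not> ?thesis"
      then have "\<forall>i\<in>{..<rings R}. tr0 R i j k + tr1 R i j k = 0" by auto
      then have "(\<Sum>i<rings R. tr0 R i j k + tr1 R i j k) = 0" by (rule sum.neutral)
      then show False using s \<open>dm j k \<ge> 1\<close> by linarith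
    qed
    then obtain i where i: "i < rings R" "0 < tr0 R i j k + tr1 R i j k" by meson
    have a: "adm n R i v" unfolding adm_def
      by (rule bexI[of _ "(j,k)"]) (use vp i(2) pp in simp_all)
    have "v \<in> {v\<in>{1..n}. adm n R i v}" using a v by simp
    then show "v \<in> (\<Union>i<rings R. {v\<in>{1..n}. adm n R i v})" using i(1) by blast
  qed
  have "n = card {1..n}" by simp
  also have "\<dots> \<le> card (\<Union>i<rings R. {v\<in>{1..n}. adm n R i v})"
    by (rule card_mono[OF _ sub]) auto
  also have "\<dots> \<le> (\<Sum>i<rings R. card {v\<in>{1..n}. adm n R i v})"
    by (rule card_UN_le) auto
  finally show ?thesis by (simp add: cost_def)
qed

lemma bad_sides:
  fixes j k e n :: nat
  defines "q \<equiv> \<lambda>v. if e < v then v - e - 1 else v + n - e - 1"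
  assumes "1 \<le> j" "j < k" "k \<le> n" "1 \<le> e" "e \<le> n"
    and bad: "(j \<le> e \<and> e < k \<and> 2*(k-j) \<le> n) \<or> (\<not>(j \<le> e \<and> e < k) \<and> 2*(k-j) \<ge> n)"
  shows "(2 * q j < n \<and> n \<le> 2 * q k) \<or> (n \<le> 2 * q j \<and> 2 * q k < n)"
  using assms unfolding q_def by (auto split: if_splits)

lemma arc_split_bound:
  assumes "arc_split n d j k a0 a1"
  shows "(if j \<le> e \<and> e < k then a0 else a1) \<le> d div 2 +
     (if (j \<le> e \<and> e < k \<and> 2*(k-j) \<le> n) \<or> (\<not>(j \<le> e \<and> e < k) \<and> 2*(k-j) \<ge> n) then d mod 2 else 0)"
proof -
  have dd: "d - d div 2 = d div 2 + d mod 2" by presburger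
  show ?thesis using assms unfolding arc_split_def dd by (auto split: if_splits)
qed

lemma arc_split_sum:
  assumes "arc_split n d j k a0 a1"
  shows "a0 + a1 = d"
  using assms unfolding arc_split_def by (auto split: if_splits)

lemma card_G:
  fixes B :: "nat set"
  assumes fin: "finite B"
  shows "2 * card {(j,k)\<in>pairs n. j \<in> B \<and> k \<in> B} \<le> card B * (card B - 1)"
proof -
  let ?G = "{(j,k)\<in>pairs n. j \<in> B \<and> k \<in> B}"
  let ?f = "\<lambda>(j::nat,k::nat). {j,k}"
  have inj: "inj_on ?f ?G"
  proof (rule inj_onI)
    fix x y assume a: "x \<in> ?G" "y \<in> ?G" and eq: "?f x = ?f y"
    obtain j k where x: "x = (j,k)" by fastforce
    obtain j' k' where y: "y = (j',k')" by fastforce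
    have "j < k" "j' < k'" using a x y by (auto simp: pairs_def)
    moreover have "{j,k} = {j',k'}" using eq x y by simp
    ultimately show "x = y" unfolding x y by (metis doubleton_eq_iff not_less_iff_gr_or_eq)
  qed
  have img: "?f ` ?G \<subseteq> {X. X \<subseteq> B \<and> card X = 2}"
    by (auto simp: pairs_def)
  have fB: "finite {X. X \<subseteq> B \<and> card X = 2}" using fin by simp
  have "card ?G \<le> card {X. X \<subseteq> B \<and> card X = 2}"
    using card_inj_on_le[OF inj img fB] .
  also have "\<dots> = card B choose 2" using n_subsets[OF fin] .
  also have "\<dots> = card B * (card B - 1) div 2" by (rule choose_two)
  finally show ?thesis by linarith
qed

lemma card_bad:
  fixes B :: "nat set" and e n :: nat
  assumes fin: "finite B" and Bn: "B \<subseteq> {1..n}" and e: "1 \<le> e" "e \<le> n"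
  shows "4 * card {(j,k)\<in>pairs n. j \<in> B \<and> k \<in> B \<and>
     ((j \<le> e \<and> e < k \<and> 2*(k-j) \<le> n) \<or> (\<not>(j \<le> e \<and> e < k) \<and> 2*(k-j) \<ge> n))} \<le> card B ^ 2"
proof -
  define q where "q = (\<lambda>v::nat. if e < v then v - e - 1 else v + n - e - 1)"
  let ?Bad = "{(j,k)\<in>pairs n. j \<in> B \<and> k \<in> B \<and>
     ((j \<le> e \<and> e < k \<and> 2*(k-j) \<le> n) \<or> (\<not>(j \<le> e \<and> e < k) \<and> 2*(k-j) \<ge> n))}"
  define Lo where "Lo = {v\<in>B. 2 * q v < n}"
  define Hi where "Hi = {v\<in>B. n \<le> 2 * q v}"
  have side: "(j \<in> Lo \<and> k \<in> Hi) \<or> (j \<in> Hi \<and> k \<in> Lo)" if "(j,k) \<in> ?Bad" for j k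
  proof -
    have "(2 * q j < n \<and> n \<le> 2 * q k) \<or> (n \<le> 2 * q j \<and> 2 * q k < n)"
    proof -
      have p: "(j,k) \<in> pairs n" using that by simp
      have jk: "1 \<le> j" "j < k" "k \<le> n" using p by (simp_all add: pairs_def)
      have bd: "(j \<le> e \<and> e < k \<and> 2*(k-j) \<le> n) \<or> (\<not>(j \<le> e \<and> e < k) \<and> 2*(k-j) \<ge> n)"
        using that by simp
      show ?thesis unfolding q_def by (rule bad_sides[OF jk e(1) e(2) bd])
    qed
    then show ?thesis using that by (auto simp: Lo_def Hi_def)
  qed
  define f where "f = (\<lambda>(j::nat,k::nat). if j \<in> Lo then (j,k) else (k,j))"
  have inj: "inj_on f ?Bad"
  proof (rule inj_onI)
    fix x y assume a: "x \<in> ?Bad" "y \<in> ?Bad" and eq: "f x = f y"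
    obtain j k where x: "x = (j,k)" by fastforce
    obtain j' k' where y: "y = (j',k')" by fastforce
    have "j < k" "j' < k'" using a x y by (auto simp: pairs_def)
    moreover have "f (j,k) = f (j',k')" using eq x y by simp
    ultimately show "x = y" unfolding x y by (auto simp: f_def split: if_splits)
  qed
  have img: "f ` ?Bad \<subseteq> Lo \<times> Hi"
  proof
    fix y assume "y \<in> f ` ?Bad"
    then obtain j k where jk: "(j,k) \<in> ?Bad" "y = f (j,k)" by auto
    have dis: "v \<in> Hi \<Longrightarrow> v \<notin> Lo" for v by (auto simp: Lo_def Hi_def)
    have fjk: "f (j,k) = (if j \<in> Lo then (j,k) else (k,j))" by (simp add: f_def)
    show "y \<in> Lo \<times> Hi" using side[OF jk(1)] dis[of j] unfolding jk(2) fjk by auto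
  qed
  have fLH: "finite (Lo \<times> Hi)" using fin by (simp add: Lo_def Hi_def)
  have "card ?Bad \<le> card (Lo \<times> Hi)" using card_inj_on_le[OF inj img fLH] .
  also have "\<dots> = card Lo * card Hi" by (rule card_cartesian_product)
  finally have c1: "card ?Bad \<le> card Lo * card Hi" .
  have "Lo \<inter> Hi = {}" by (auto simp: Lo_def Hi_def)
  moreover have "Lo \<union> Hi \<subseteq> B" by (auto simp: Lo_def Hi_def)
  ultimately have "card Lo + card Hi \<le> card B"
  proof -
    have fL: "finite Lo" "finite Hi" using fin by (auto simp: Lo_def Hi_def)
    have "card Lo + card Hi = card (Lo \<union> Hi)" using card_Un_disjoint[OF fL \<open>Lo \<inter> Hi = {}\<close>] by simp
    also have "\<dots> \<le> card B" using card_mono[OF fin \<open>Lo \<union> Hi \<subseteq> B\<close>] .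
    finally show ?thesis .
  qed
  then have "(card Lo + card Hi)^2 \<le> card B ^ 2" by (simp add: power_mono)
  moreover have "4 * (card Lo * card Hi) \<le> (card Lo + card Hi)^2"
  proof -
    have "int (4 * (card Lo * card Hi)) \<le> int ((card Lo + card Hi)^2)"
    proof -
      have "0 \<le> (int (card Lo) - int (card Hi))^2" by simp
      then show ?thesis by (simp add: power2_eq_square algebra_simps)
    qed
    then show ?thesis by linarith
  qed
  ultimately show ?thesis using c1 by linarith
qed

lemma sum_indic:
  fixes h :: nat
  assumes "Q \<subseteq> pairs n"
  shows "(\<Sum>p\<in>pairs n. if p \<in> Q then h else 0) = card Q * h"
proof -
  have "(\<Sum>p\<in>pairs n. if p \<in> Q then h else 0) = (\<Sum>p\<in>pairs n \<inter> Q. h)"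
    by (rule sum.inter_restrict[symmetric]) (rule finite_pairs)
  also have "pairs n \<inter> Q = Q" using assms by blast
  finally show ?thesis by simp
qed

lemma load_small:
  fixes B :: "nat set"
  assumes Bn: "B \<subseteq> {1..n}" and fin: "finite B" and e: "e \<in> {1..n}"
    and tr: "\<forall>(j,k)\<in>pairs n. (j \<in> B \<and> k \<in> B \<and> arc_split n d j k (tr0 R i j k) (tr1 R i j k))
                 \<or> (tr0 R i j k = 0 \<and> tr1 R i j k = 0)"
  shows "4 * load n R i e \<le> 2 * (card B * (card B - 1)) * (d div 2) + card B ^ 2 * (d mod 2)"
proof -
  define G where "G = {(j,k)\<in>pairs n. j \<in> B \<and> k \<in> B}"
  define Bad where "Bad = {(j,k)\<in>pairs n. j \<in> B \<and> k \<in> B \<and>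
     ((j \<le> e \<and> e < k \<and> 2*(k-j) \<le> n) \<or> (\<not>(j \<le> e \<and> e < k) \<and> 2*(k-j) \<ge> n))}"
  have "load n R i e \<le> (\<Sum>p\<in>pairs n. (if p \<in> G then d div 2 else 0) + (if p \<in> Bad then d mod 2 else 0))"
    unfolding load_def
  proof (rule sum_mono, clarify)
    fix j k assume jk: "(j,k) \<in> pairs n"
    from tr jk consider "j \<in> B" "k \<in> B" "arc_split n d j k (tr0 R i j k) (tr1 R i j k)"
      | "tr0 R i j k = 0" "tr1 R i j k = 0" by auto
    then show "(if j \<le> e \<and> e < k then tr0 R i j k else tr1 R i j k)
         \<le> (if (j,k) \<in> G then d div 2 else 0) + (if (j,k) \<in> Bad then d mod 2 else 0)"
    proof cases
      case 1
      have "(j,k) \<in> G" using 1 jk by (simp add: G_def)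
      moreover have "((j \<le> e \<and> e < k \<and> 2*(k-j) \<le> n) \<or> (\<not>(j \<le> e \<and> e < k) \<and> 2*(k-j) \<ge> n))
          \<longleftrightarrow> (j,k) \<in> Bad" using 1 jk by (simp add: Bad_def)
      ultimately show ?thesis using arc_split_bound[OF 1(3), of e] by simp
    next
      case 2 then show ?thesis by simp
    qed
  qed
  also have "\<dots> = card G * (d div 2) + card Bad * (d mod 2)"
    using sum_indic[of G n "d div 2"] sum_indic[of Bad n "d mod 2"]
    by (simp add: sum.distrib G_def Bad_def subset_iff)
  finally have l: "load n R i e \<le> card G * (d div 2) + card Bad * (d mod 2)" .
  have g: "2 * card G \<le> card B * (card B - 1)" unfolding G_def by (rule card_G[OF fin])
  have b: "4 * card Bad \<le> card B ^ 2" unfolding Bad_def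
    by (rule card_bad[OF fin Bn]) (use e in auto)
  have "4 * load n R i e \<le> 2 * (2 * card G) * (d div 2) + (4 * card Bad) * (d mod 2)"
    using l by (simp add: algebra_simps)
  also have "\<dots> \<le> 2 * (card B * (card B - 1)) * (d div 2) + card B ^ 2 * (d mod 2)"
    using g b by (intro add_mono mult_right_mono mult_left_mono) auto
  finally show ?thesis .
qed

lemma cap_arith:
  fixes M d c L :: nat
  assumes l: "4*L \<le> 2*(M*(M-1))*(d div 2) + M^2*(d mod 2)"
    and m: "M^2 * d \<le> 4*c \<or> (M = 2 \<and> d < 2*c)"
  shows "L \<le> c"
  using m
proof
  assume a: "M^2 * d \<le> 4*c"
  have "M*(M-1) \<le> M^2" by (simp add: power2_eq_square)
  then have x: "2*(M*(M-1))*(d div 2) \<le> 2*(M^2)*(d div 2)" by (intro mult_le_mono1 mult_le_mono2)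
  have y0: "M^2 * (2*(d div 2) + d mod 2) = 2*(M^2)*(d div 2) + M^2*(d mod 2)"
    unfolding distrib_left by (simp add: ac_simps)
  have y: "2*(M^2)*(d div 2) + M^2*(d mod 2) = M^2 * d" unfolding y0[symmetric] by simp
  have "4*L \<le> M^2 * d" using l x y by linarith
  then show ?thesis using a by linarith
next
  assume a: "M = 2 \<and> d < 2*c"
  then have "4*L \<le> 4*(d div 2) + 4*(d mod 2)" using l by simp
  moreover have "d div 2 + d mod 2 \<le> c" using a by linarith
  ultimately show ?thesis by linarith
qed

lemma algM_facts:
  fixes d c n :: nat
  assumes c: "c \<ge> 1" and d: "d \<ge> 1" and n: "n \<ge> 2" and fl: "real d / (2 * real c) < 1"
  defines "M \<equiv> algM n (real d / (2 * real c))"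
  shows "2 \<le> M" "M \<le> n" "M^2 * d \<le> 4*c \<or> (M = 2 \<and> d < 2*c)"
proof -
  define s where "s = \<lfloor>sqrt (2 / (real d / (2 * real c)))\<rfloor>"
  have M: "M = (if s < 2 then 2 else if s > int n then n else nat s)"
    unfolding M_def algM_def s_def Let_def ..
  show "2 \<le> M" "M \<le> n" using n unfolding M by auto
  have q: "2 / (real d / (2 * real c)) = 4 * real c / real d" using c d by (simp add: field_simps)
  have dc: "d < 2*c"
  proof -
    have "real d < 2 * real c" using fl c by (simp add: field_simps)
    then show ?thesis by linarith
  qed
  show "M^2 * d \<le> 4*c \<or> (M = 2 \<and> d < 2*c)"
  proof (cases "s < 2")
    case True then show ?thesis using dc unfolding M by simp
  next
    case False
    then have Ms: "real M \<le> real_of_int s" "s \<ge> 0" unfolding M by auto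
    have "real_of_int s \<le> sqrt (4 * real c / real d)" unfolding s_def q by simp
    then have "real M \<le> sqrt (4 * real c / real d)" using Ms by linarith
    then have "(real M)^2 \<le> 4 * real c / real d"
      by (metis of_nat_0_le_iff power_mono real_sqrt_pow2 real_sqrt_ge_0_iff zero_le_divide_iff
          zero_le_numeral zero_le_mult_iff)
    then have "(real M)^2 * real d \<le> 4 * real c" using d by (simp add: field_simps)
    then have "real (M^2 * d) \<le> real (4 * c)" by simp
    then show ?thesis by linarith
  qed
qed

lemma algA_small:
  fixes n c d :: nat and R :: routing
  assumes A: "algA n c d R" and fl: "real d / (2 * real c) < 1" and c: "c \<ge> 1" and d: "d \<ge> 1" and n: "n \<ge> 2"
  defines "M \<equiv> algM n (real d / (2 * real c))"
  shows "feasible n c (\<lambda>j k. d) R \<and>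
    cost n R \<le> (nat \<lceil>real n / real (M div 2)\<rceil> choose 2) * M"
proof -
  define f where "f = real d / (2 * real c)"
  define \<mu> where "\<mu> = M div 2"
  have Mf: "2 \<le> M" "M \<le> n" "M^2 * d \<le> 4*c \<or> (M = 2 \<and> d < 2*c)"
    using algM_facts[OF c d n fl] unfolding M_def by auto
  have "\<exists>F E bl.
          finite F \<and> card F = nat \<lceil>real n / real \<mu>\<rceil> \<and>
          (\<forall>A \<in> F. A \<subseteq> {1..n} \<and> card A = \<mu>) \<and> \<Union>F = {1..n} \<and>
          (\<forall>A \<in> F. \<forall>B \<in> F. A \<noteq> B \<longrightarrow>
              A \<union> B \<subseteq> E {A, B} \<and> E {A, B} \<subseteq> {1..n} \<and> card (E {A, B}) = M) \<and>
          distinct bl \<and>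
          set bl = (if card F = 1 then {{1..n}}
                    else {E {A, B} | A B. A \<in> F \<and> B \<in> F \<and> A \<noteq> B}) \<and>
          rings R = length bl \<and>
          (\<forall>i j k.
             (if i < rings R \<and> (j, k) \<in> pairs n \<and> j \<in> bl ! i \<and> k \<in> bl ! i \<and>
                 \<not> (\<exists>i' < i. j \<in> bl ! i' \<and> k \<in> bl ! i')
              then arc_split n d j k (tr0 R i j k) (tr1 R i j k)
              else tr0 R i j k = 0 \<and> tr1 R i j k = 0))"
    using A fl unfolding algA_def Let_def M_def \<mu>_def by simp
  then obtain F E bl where
    finF: "finite F" and cardF: "card F = nat \<lceil>real n / real \<mu>\<rceil>" and
    Fsub: "\<forall>A \<in> F. A \<subseteq> {1..n} \<and> card A = \<mu>" and Fcov: "\<Union>F = {1..n}" and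
    Eprop: "\<forall>A \<in> F. \<forall>B \<in> F. A \<noteq> B \<longrightarrow>
              A \<union> B \<subseteq> E {A, B} \<and> E {A, B} \<subseteq> {1..n} \<and> card (E {A, B}) = M" and
    dbl: "distinct bl" and
    setbl0: "set bl = (if card F = 1 then {{1..n}}
                    else {E {A, B} | A B. A \<in> F \<and> B \<in> F \<and> A \<noteq> B})" and
    rR: "rings R = length bl" and
    trR: "\<forall>i j k.
             (if i < rings R \<and> (j, k) \<in> pairs n \<and> j \<in> bl ! i \<and> k \<in> bl ! i \<and>
                 \<not> (\<exists>i' < i. j \<in> bl ! i' \<and> k \<in> bl ! i')
              then arc_split n d j k (tr0 R i j k) (tr1 R i j k)
              else tr0 R i j k = 0 \<and> tr1 R i j k = 0)"
    by (elim exE conjE) blast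
  have mu1: "\<mu> \<ge> 1" "2 * \<mu> \<le> n" using Mf unfolding \<mu>_def by auto
  have "real n / real \<mu> \<ge> 2" using mu1 by (simp add: field_simps)
  then have cF2: "card F \<ge> 2" unfolding cardF by linarith
  have setbl: "set bl = {E {A, B} | A B. A \<in> F \<and> B \<in> F \<and> A \<noteq> B}"
    using setbl0 cF2 by simp
  have blprop: "bl ! i \<subseteq> {1..n} \<and> card (bl ! i) = M" if "i < rings R" for i
  proof -
    have "bl ! i \<in> set bl" using that rR by simp
    then obtain A B where AB: "bl ! i = E {A,B}" "A \<in> F" "B \<in> F" "A \<noteq> B" unfolding setbl by blast
    then show ?thesis using Eprop by simp
  qed
  define Z where "Z i j k = (i < rings R \<and> (j, k) \<in> pairs n \<and> j \<in> bl ! i \<and> k \<in> bl ! i \<and>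
                 \<not> (\<exists>i' < i. j \<in> bl ! i' \<and> k \<in> bl ! i'))" for i j k
  have trZ: "\<And>i j k. Z i j k \<Longrightarrow> arc_split n d j k (tr0 R i j k) (tr1 R i j k)"
    and trN: "\<And>i j k. \<not> Z i j k \<Longrightarrow> tr0 R i j k = 0 \<and> tr1 R i j k = 0"
    using trR unfolding Z_def by (metis (full_types))+
  have loads: "load n R i e \<le> c" if i: "i < rings R" and e: "e \<in> {1..n}" for i e
  proof -
    have bp: "bl ! i \<subseteq> {1..n}" "card (bl ! i) = M" using blprop[OF i] by auto
    have fin: "finite (bl ! i)" using bp(1) finite_subset by blast
    have tr: "\<forall>(j,k)\<in>pairs n. (j \<in> bl ! i \<and> k \<in> bl ! i \<and> arc_split n d j k (tr0 R i j k) (tr1 R i j k))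
                 \<or> (tr0 R i j k = 0 \<and> tr1 R i j k = 0)"
    proof clarify
      fix j k assume "(j,k) \<in> pairs n" "\<not> (tr0 R i j k = 0 \<and> tr1 R i j k = 0)"
      then show "j \<in> bl ! i \<and> k \<in> bl ! i \<and> arc_split n d j k (tr0 R i j k) (tr1 R i j k)"
        using trN trZ unfolding Z_def by meson
    qed
    have "4 * load n R i e \<le> 2 * (M * (M - 1)) * (d div 2) + M ^ 2 * (d mod 2)"
      using load_small[OF bp(1) fin e tr] unfolding bp(2) .
    then show ?thesis using cap_arith Mf(3) by blast
  qed
  have sums: "(\<Sum>i<rings R. tr0 R i j k + tr1 R i j k) = d" if jk: "(j,k) \<in> pairs n" for j k
  proof -
    have jkn: "j \<in> {1..n}" "k \<in> {1..n}" using jk by (auto simp: pairs_def)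
    obtain A where A: "A \<in> F" "j \<in> A" using Fcov jkn by blast
    obtain B where B: "B \<in> F" "k \<in> B" using Fcov jkn by blast
    have "\<exists>X\<in>set bl. j \<in> X \<and> k \<in> X"
    proof (cases "A = B")
      case False
      have m: "E{A,B} \<in> set bl" unfolding setbl mem_Collect_eq
        by (rule exI[of _ A], rule exI[of _ B]) (simp add: A(1) B(1) False)
      have "A \<union> B \<subseteq> E{A,B}" using Eprop[rule_format, OF A(1) B(1) False] by (rule conjunct1)
      then have "j \<in> E{A,B} \<and> k \<in> E{A,B}" using A(2) B(2) by blast
      then show ?thesis using m by (rule bexI)
    next
      case True
      have "card F \<noteq> 1" using cF2 by simp
      have "F \<noteq> {A}"
      proof
        assume "F = {A}"
        then have "card F = 1" by simp
        then show False using \<open>card F \<noteq> 1\<close> by simp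
      qed
      then obtain C where C: "C \<in> F" "C \<noteq> A" using A(1) by blast
      have CA: "A \<noteq> C" using C(2) by (rule not_sym)
      have m: "E{A,C} \<in> set bl" unfolding setbl mem_Collect_eq
        by (rule exI[of _ A], rule exI[of _ C]) (simp add: A(1) C(1) CA)
      have "A \<union> C \<subseteq> E{A,C}" using Eprop[rule_format, OF A(1) C(1) CA] by (rule conjunct1)
      then have "j \<in> E{A,C} \<and> k \<in> E{A,C}" using A(2) B(2) True by blast
      then show ?thesis using m by (rule bexI)
    qed
    then obtain i1 where i1: "i1 < length bl" "j \<in> bl ! i1" "k \<in> bl ! i1"
      by (metis in_set_conv_nth)
    define i0 where "i0 = (LEAST i. j \<in> bl ! i \<and> k \<in> bl ! i)"
    have i0: "j \<in> bl ! i0 \<and> k \<in> bl ! i0" unfolding i0_def by (rule LeastI[of _ i1]) (use i1 in auto)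
    have i0le: "i0 \<le> i1" unfolding i0_def by (rule Least_le) (use i1 in auto)
    have i0min: "\<not> (j \<in> bl ! i' \<and> k \<in> bl ! i')" if "i' < i0" for i'
      using not_less_Least[of i' "\<lambda>i. j \<in> bl ! i \<and> k \<in> bl ! i"] that unfolding i0_def by blast
    have Zi: "Z i j k \<longleftrightarrow> i = i0" if "i < rings R" for i
    proof
      assume z: "Z i j k"
      then have "j \<in> bl ! i \<and> k \<in> bl ! i" unfolding Z_def by auto
      then have "i0 \<le> i" unfolding i0_def by (rule Least_le)
      moreover have "\<not> i0 < i" using z i0 unfolding Z_def by blast
      ultimately show "i = i0" by simp
    next
      assume "i = i0"
      have "\<not> (\<exists>i'<i. j \<in> bl ! i' \<and> k \<in> bl ! i')" using i0min \<open>i = i0\<close> by blast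
      then show "Z i j k" unfolding Z_def using that jk i0 \<open>i = i0\<close> by blast
    qed
    have "(\<Sum>i<rings R. tr0 R i j k + tr1 R i j k) = (\<Sum>i<rings R. if i = i0 then d else 0)"
    proof (rule sum.cong)
      fix i assume "i \<in> {..<rings R}"
      then have ir: "i < rings R" by simp
      show "tr0 R i j k + tr1 R i j k = (if i = i0 then d else 0)"
      proof (cases "i = i0")
        case True
        then have "Z i j k" using Zi[OF ir] by simp
        then have "tr0 R i j k + tr1 R i j k = d" using trZ arc_split_sum by blast
        then show ?thesis using True by simp
      next
        case False
        then have "\<not> Z i j k" using Zi[OF ir] by simp
        then have "tr0 R i j k = 0 \<and> tr1 R i j k = 0" by (rule trN)
        then show ?thesis using False by simp
      qed
    qed simp
    also have "\<dots> = d" using i0le i1 rR by simp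
    finally show ?thesis .
  qed
  have feas: "feasible n c (\<lambda>j k. d) R"
  proof -
    have "\<forall>(j, k)\<in>pairs n. (\<Sum>i<rings R. tr0 R i j k + tr1 R i j k) = d" using sums by blast
    moreover have "\<forall>i<rings R. \<forall>e\<in>{1..n}. load n R i e \<le> c" using loads by blast
    ultimately show ?thesis unfolding feasible_def by blast
  qed
  have adm_in: "{v\<in>{1..n}. adm n R i v} \<subseteq> bl ! i" if i: "i < rings R" for i
  proof clarify
    fix v assume "v \<in> {1..n}" "adm n R i v"
    then obtain j k where jk: "(j,k) \<in> pairs n" "v = j \<or> v = k" "tr0 R i j k + tr1 R i j k > 0"
      unfolding adm_def by auto
    have "Z i j k"
    proof (rule ccontr)
      assume "\<not> Z i j k"
      then have "tr0 R i j k = 0 \<and> tr1 R i j k = 0" by (rule trN)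
      then show False using jk(3) by simp
    qed
    then show "v \<in> bl ! i" using jk unfolding Z_def by auto
  qed
  have "cost n R \<le> (\<Sum>i<rings R. M)"
    unfolding cost_def
  proof (rule sum_mono)
    fix i assume "i \<in> {..<rings R}"
    then have i: "i < rings R" by simp
    have "finite (bl ! i)" using blprop[OF i] finite_subset by blast
    then have "card {v\<in>{1..n}. adm n R i v} \<le> card (bl ! i)" using adm_in[OF i] card_mono by blast
    then show "card {v\<in>{1..n}. adm n R i v} \<le> M" using blprop[OF i] by simp
  qed
  also have "\<dots> = length bl * M" using rR by simp
  also have "length bl \<le> card F choose 2"
  proof -
    have "length bl = card (set bl)" using distinct_card[OF dbl] by simp
    also have "set bl = E ` {X. X \<subseteq> F \<and> card X = 2}"
      unfolding setbl
    proof (intro set_eqI iffI)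
      fix Y assume "Y \<in> {E {A, B} |A B. A \<in> F \<and> B \<in> F \<and> A \<noteq> B}"
      then obtain A B where "Y = E {A,B}" "A \<in> F" "B \<in> F" "A \<noteq> B" by blast
      then show "Y \<in> E ` {X. X \<subseteq> F \<and> card X = 2}" by (intro image_eqI[of _ _ "{A,B}"]) auto
    next
      fix Y assume "Y \<in> E ` {X. X \<subseteq> F \<and> card X = 2}"
      then obtain X where X: "Y = E X" "X \<subseteq> F" "card X = 2" by blast
      then obtain A B where "X = {A,B}" "A \<noteq> B" by (meson card_2_iff)
      then show "Y \<in> {E {A, B} |A B. A \<in> F \<and> B \<in> F \<and> A \<noteq> B}" using X by blast
    qed
    also have "card (E ` {X. X \<subseteq> F \<and> card X = 2}) \<le> card {X. X \<subseteq> F \<and> card X = 2}"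
      by (rule card_image_le) (use finF in simp)
    also have "\<dots> = card F choose 2" by (rule n_subsets[OF finF])
    finally show ?thesis .
  qed
  then have "length bl * M \<le> (card F choose 2) * M" by simp
  finally have "cost n R \<le> (card F choose 2) * M" .
  then show ?thesis using feas cardF unfolding \<mu>_def by simp
qed

lemma sum_split_add: "(\<Sum>i<a+b. f i) = (\<Sum>i<a. f i) + (\<Sum>q<b. f (a+q))" for f :: "nat \<Rightarrow> nat"
  by (induction b) (simp_all add: add.assoc)

lemma sum_blocks: "(\<Sum>i<m*g. f i) = (\<Sum>x<m. \<Sum>q<g. f (x*g+q))" for f :: "nat \<Rightarrow> nat"
proof (induction m)
  case 0 then show ?case by simp
next
  case (Suc m)
  have "(\<Sum>i<Suc m*g. f i) = (\<Sum>i<m*g+g. f i)" by (simp add: add.commute)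
  also have "\<dots> = (\<Sum>i<m*g. f i) + (\<Sum>q<g. f (m*g+q))" by (rule sum_split_add)
  finally show ?case using Suc by simp
qed

lemma algA_big:
  fixes n c d :: nat and R :: routing
  assumes A: "algA n c d R" and fg: "real d / (2 * real c) \<ge> 1" and c: "c \<ge> 1"
  shows "feasible n c (\<lambda>j k. d) R \<and>
    cost n R \<le> 2 * card (pairs n) * nat \<lceil>real d / (2 * real c)\<rceil>"
proof -
  define g where "g = nat \<lceil>real d / (2 * real c)\<rceil>"
  define a where "a q = min (2 * c) (d - 2 * c * q)" for q
  have "\<exists>ps. distinct ps \<and> set ps = pairs n \<and> rings R = length ps * g \<and>
          (\<forall>i j k. tr0 R i j k =
               (if i < rings R \<and> (j, k) = ps ! (i div g) then a (i mod g) div 2 else 0)) \<and>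
          (\<forall>i j k. tr1 R i j k =
               (if i < rings R \<and> (j, k) = ps ! (i div g) then a (i mod g) - a (i mod g) div 2 else 0))"
    using A fg unfolding algA_def Let_def g_def a_def by simp
  then obtain ps where dps: "distinct ps" and sps: "set ps = pairs n" and rR: "rings R = length ps * g"
    and t0: "\<And>i j k. tr0 R i j k =
               (if i < rings R \<and> (j, k) = ps ! (i div g) then a (i mod g) div 2 else 0)"
    and t1: "\<And>i j k. tr1 R i j k =
               (if i < rings R \<and> (j, k) = ps ! (i div g) then a (i mod g) - a (i mod g) div 2 else 0)"
    by (elim exE conjE) blast
  have cp: "real c > 0" using c by simp
  have gup: "real d / (2 * real c) \<le> real g" unfolding g_def by linarith
  have glo: "real g < real d / (2 * real c) + 1"
  proof -
    have "\<lceil>real d / (2 * real c)\<rceil> \<ge> 0" using fg by simp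
    then have "real g = real_of_int \<lceil>real d / (2 * real c)\<rceil>" unfolding g_def by simp
    then show ?thesis using ceiling_correct[of "real d / (2 * real c)"] by linarith
  qed
  have g1: "g \<ge> 1" using gup fg by linarith
  have dle: "d \<le> 2 * c * g"
  proof -
    have "real d \<le> 2 * real c * real g" using gup cp by (simp add: divide_le_eq mult.commute)
    then show ?thesis by (metis of_nat_le_iff of_nat_mult of_nat_numeral)
  qed
  have dgt: "2 * c * (g - 1) < d"
  proof -
    have "real g - 1 < real d / (2 * real c)" using glo by linarith
    then have f1: "(real g - 1) * (2 * real c) < real d" using cp by (simp add: less_divide_eq)
    have e: "real (2 * c * (g - 1)) = (real g - 1) * (2 * real c)" proof -
      have "real (g - 1) = real g - 1" using g1 by (simp add: of_nat_diff)
      then show ?thesis by (simp only: of_nat_mult of_nat_numeral) (simp add: algebra_simps)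
    qed
    have "real (2 * c * (g - 1)) < real d" unfolding e by (rule f1)
    then show ?thesis by linarith
  qed
  have asum: "(\<Sum>q<g. a q) = d"
  proof -
    obtain g' where g': "g = Suc g'" using g1 by (cases g) auto
    have "(\<Sum>q<g'. a q) = (\<Sum>q<g'. 2 * c)"
    proof (rule sum.cong)
      fix q assume "q \<in> {..<g'}"
      then have "q + 1 \<le> g'" by simp
      then have "2 * c * (q + 1) \<le> 2 * c * g'" by (rule mult_le_mono2)
      moreover have "2 * c * g' < d" using dgt g' by simp
      ultimately show "a q = 2 * c" unfolding a_def by (simp add: algebra_simps)
    qed simp
    moreover have "a g' = d - 2 * c * g'" unfolding a_def using dle g' by simp
    ultimately have "(\<Sum>q<g. a q) = g' * (2 * c) + (d - 2 * c * g')" using g' by simp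
    also have "\<dots> = d" using dgt g' by simp
    finally show ?thesis .
  qed
  have ale: "a q \<le> 2 * c" for q unfolding a_def by simp
  have lenp: "length ps = card (pairs n)" using distinct_card[OF dps] sps by simp
  have loads: "load n R i e \<le> c" if i: "i < rings R" for i e
  proof -
    define p0 where "p0 = ps ! (i div g)"
    have "i div g < length ps" using i rR g1 by (simp add: less_mult_imp_div_less)
    then have p0: "p0 \<in> pairs n" unfolding p0_def using sps nth_mem by blast
    have "load n R i e \<le> (\<Sum>p\<in>pairs n. if p = p0 then c else 0)"
      unfolding load_def
    proof (rule sum_mono, clarify)
      fix j k assume "(j,k) \<in> pairs n"
      show "(if j \<le> e \<and> e < k then tr0 R i j k else tr1 R i j k) \<le> (if (j,k) = p0 then c else 0)"
        using ale[of "i mod g"] unfolding t0 t1 p0_def using i by auto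
    qed
    also have "\<dots> = c" using p0 finite_pairs by simp
    finally show ?thesis .
  qed
  have sums: "(\<Sum>i<rings R. tr0 R i j k + tr1 R i j k) = d" if jk: "(j,k) \<in> pairs n" for j k
  proof -
    have "(\<Sum>i<rings R. tr0 R i j k + tr1 R i j k) =
        (\<Sum>i<length ps * g. if (j,k) = ps ! (i div g) then a (i mod g) else 0)"
      unfolding rR by (rule sum.cong) (auto simp: t0 t1 rR)
    also have "\<dots> = (\<Sum>x<length ps. \<Sum>q<g. if (j,k) = ps ! x then a q else 0)"
      unfolding sum_blocks
    proof (intro sum.cong refl)
      fix x q assume "q \<in> {..<g}"
      then have q: "q < g" by simp
      have md: "(x*g+q) mod g = q" using q by (simp add: add.commute[of "x*g"])
      have dv: "(x*g+q) div g = x" using q by (simp add: add.commute[of "x*g"])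
      show "(if (j,k) = ps ! ((x*g+q) div g) then a ((x*g+q) mod g) else 0)
          = (if (j,k) = ps ! x then a q else 0)" unfolding md dv ..
    qed
    also have "\<dots> = (\<Sum>x<length ps. if (j,k) = ps ! x then d else 0)"
      by (rule sum.cong) (auto simp: asum)
    also have "\<dots> = d"
    proof -
      obtain x0 where x0: "x0 < length ps" "ps ! x0 = (j,k)"
        using jk sps by (metis in_set_conv_nth)
      have "(\<Sum>x<length ps. if (j,k) = ps ! x then d else 0) = (\<Sum>x<length ps. if x = x0 then d else 0)"
      proof (rule sum.cong)
        fix x assume "x \<in> {..<length ps}"
        then have "x < length ps" by simp
        then have "(j,k) = ps ! x \<longleftrightarrow> x = x0" using x0 dps by (metis nth_eq_iff_index_eq)
        then show "(if (j,k) = ps ! x then d else 0) = (if x = x0 then d else 0)" by simp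
      qed simp
      also have "\<dots> = d" using x0 by simp
      finally show ?thesis .
    qed
    finally show ?thesis .
  qed
  have feas: "feasible n c (\<lambda>j k. d) R"
  proof -
    have "\<forall>(j, k)\<in>pairs n. (\<Sum>i<rings R. tr0 R i j k + tr1 R i j k) = d" using sums by blast
    moreover have "\<forall>i<rings R. \<forall>e\<in>{1..n}. load n R i e \<le> c" using loads by blast
    ultimately show ?thesis unfolding feasible_def by blast
  qed
  have "cost n R \<le> (\<Sum>i<rings R. 2)"
    unfolding cost_def
  proof (rule sum_mono)
    fix i assume "i \<in> {..<rings R}"
    define p0 where "p0 = ps ! (i div g)"
    have "{v\<in>{1..n}. adm n R i v} \<subseteq> {fst p0, snd p0}"
    proof
      fix v assume "v \<in> {v\<in>{1..n}. adm n R i v}"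
      then have "adm n R i v" by simp
      then obtain j k where jk: "(j,k) \<in> pairs n" "v = j \<or> v = k" "0 < tr0 R i j k \<or> 0 < tr1 R i j k"
        unfolding adm_def by auto
      then have "(j,k) = p0" unfolding t0 t1 p0_def by (auto split: if_splits)
      then show "v \<in> {fst p0, snd p0}" using jk(2) by auto
    qed
    then have "card {v\<in>{1..n}. adm n R i v} \<le> card {fst p0, snd p0}" by (rule card_mono[rotated]) simp
    also have "\<dots> \<le> 2" by (simp add: card_insert_le_m1)
    finally show "card {v\<in>{1..n}. adm n R i v} \<le> 2" .
  qed
  also have "\<dots> = 2 * card (pairs n) * g" using rR lenp by simp
  finally show ?thesis using feas unfolding g_def by simp
qed

lemma card_pairs: "2 * card (pairs n) = n * (n - 1)"
proof (induction n)
  case 0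
  have "pairs 0 = {}" by (auto simp: pairs_def)
  then show ?case by simp
next
  case (Suc n)
  have eq: "pairs (Suc n) = pairs n \<union> (\<lambda>j. (j, Suc n)) ` {1..n}"
    by (auto simp: pairs_def)
  have dis: "pairs n \<inter> (\<lambda>j. (j, Suc n)) ` {1..n} = {}" by (auto simp: pairs_def)
  have "card (pairs (Suc n)) = card (pairs n) + card ((\<lambda>j. (j, Suc n)) ` {1..n})"
    unfolding eq by (rule card_Un_disjoint[OF finite_pairs _ dis]) simp
  also have "card ((\<lambda>j. (j, Suc n)) ` {1..n}) = n"
    by (subst card_image) (auto simp: inj_on_def)
  finally have "2 * card (pairs (Suc n)) = n * (n - 1) + 2 * n" using Suc by simp
  also have "\<dots> = Suc n * (Suc n - 1)" by (cases n) (simp_all add: algebra_simps)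
  finally show ?case .
qed

lemma ceil_facts:
  fixes n \<mu> :: nat
  assumes "\<mu> \<ge> 1"
  defines "p \<equiv> nat \<lceil>real n / real \<mu>\<rceil>"
  shows "(p - 1) * \<mu> < n \<or> p = 0" "p * \<mu> < n + \<mu>"
proof -
  have mp: "real \<mu> > 0" using assms by simp
  have "real n / real \<mu> \<ge> 0" using mp by simp
  then have cz: "\<lceil>real n / real \<mu>\<rceil> \<ge> 0" by linarith
  have rp: "real p = real_of_int \<lceil>real n / real \<mu>\<rceil>" unfolding p_def using cz by simp
  have lt: "real p < real n / real \<mu> + 1" unfolding rp using ceiling_correct[of "real n / real \<mu>"] by linarith
  then have "real p * real \<mu> < real n + real \<mu>" using mp by (simp add: field_simps)
  then have "real (p * \<mu>) < real (n + \<mu>)" by simp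
  then show "p * \<mu> < n + \<mu>" by (simp only: of_nat_less_iff)
  then show "(p - 1) * \<mu> < n \<or> p = 0" by (cases p) (simp_all add: algebra_simps)
qed

lemma comb_ineq:
  fixes s n :: nat
  assumes s2: "2 \<le> s" and sn: "s \<le> n"
  defines "\<mu> \<equiv> s div 2"
  defines "p \<equiv> nat \<lceil>real n / real \<mu>\<rceil>"
  shows "p * (p - 1) * (s * (s + 1)) \<le> 12 * (n * (n - 1))"
proof -
  have mu1: "\<mu> \<ge> 1" using s2 unfolding \<mu>_def by simp
  have cf: "(p - 1) * \<mu> < n \<or> p = 0" "p * \<mu> < n + \<mu>" using ceil_facts[OF mu1, of n] unfolding p_def by auto
  show ?thesis
  proof (cases "p = 0")
    case True then show ?thesis by simp
  next
    case False
    then have a: "(p - 1) * \<mu> \<le> n - 1" and b: "p * \<mu> \<le> n + \<mu> - 1" using cf by auto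
    show ?thesis
    proof (cases "\<mu> = 1")
      case True
      then have "s \<le> 3" unfolding \<mu>_def by linarith
      then have "s = 2 \<or> s = 3" using s2 by linarith
      then have ss: "s * (s + 1) \<le> 12" by auto
      have "p * (p - 1) \<le> n * (n - 1)" using a b True by (simp add: mult_le_mono)
      then show ?thesis using ss by (metis mult.commute mult_le_mono)
    next
      case False
      then have mu2: "\<mu> \<ge> 2" using mu1 by simp
      have s_le: "s \<le> 2 * \<mu> + 1" unfolding \<mu>_def by simp
      have "s * (s + 1) \<le> (2 * \<mu> + 1) * (2 * \<mu> + 2)" using s_le by (intro mult_le_mono) auto
      also have "\<dots> \<le> 8 * (\<mu> * \<mu>)"
      proof -
        have "6 * \<mu> + 2 \<le> 4 * (\<mu> * \<mu>)"
        proof -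
          have "4 * (\<mu> * \<mu>) \<ge> 4 * (2 * \<mu>)" using mu2 by (intro mult_le_mono) auto
          then show ?thesis using mu2 by linarith
        qed
        then show ?thesis by (simp add: algebra_simps)
      qed
      finally have ss: "s * (s + 1) \<le> 8 * (\<mu> * \<mu>)" .
      have "p * (p - 1) * (s * (s + 1)) \<le> p * (p - 1) * (8 * (\<mu> * \<mu>))" using ss by simp
      also have "\<dots> = 8 * ((p * \<mu>) * ((p - 1) * \<mu>))" by (simp add: algebra_simps)
      also have "\<dots> \<le> 8 * ((n + \<mu> - 1) * (n - 1))" using a b by (intro mult_le_mono) auto
      also have "\<dots> \<le> 12 * (n * (n - 1))"
      proof -
        have "2 * \<mu> \<le> n" using sn unfolding \<mu>_def by linarith
        then have "8 * (n + \<mu> - 1) \<le> 12 * n" by linarith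
        then have "8 * (n + \<mu> - 1) * (n - 1) \<le> 12 * n * (n - 1)" by (rule mult_right_mono) simp
        then show ?thesis by (simp add: algebra_simps)
      qed
      finally show ?thesis .
    qed
  qed
qed

lemma case_big:
  fixes cst P m D c d :: nat and K :: real
  assumes cst: "cst \<le> 2 * P * nat \<lceil>real d / (2 * real c)\<rceil>" and fg: "real d / (2 * real c) \<ge> 1"
    and c: "c \<ge> 1" and H0: "real P * real D \<le> real m * real c" and dK: "real d \<le> K * real D"
    and K: "K \<ge> 1"
  shows "real cst \<le> 2 * K * real m"
proof -
  define f where "f = real d / (2 * real c)"
  have cp: "real c > 0" using c by simp
  have "\<lceil>f\<rceil> \<ge> 0" using fg unfolding f_def by linarith
  then have rg: "real (nat \<lceil>f\<rceil>) = real_of_int \<lceil>f\<rceil>" by simp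
  have "real (nat \<lceil>f\<rceil>) < f + 1" unfolding rg using ceiling_correct[of f] by linarith
  also have "\<dots> \<le> 2 * f" using fg unfolding f_def by linarith
  also have "2 * f = real d / real c" unfolding f_def using cp by (simp add: field_simps)
  finally have g: "real (nat \<lceil>f\<rceil>) \<le> real d / real c" by simp
  have "real cst \<le> 2 * real P * real (nat \<lceil>f\<rceil>)" using cst unfolding f_def
    by (metis of_nat_le_iff of_nat_mult of_nat_numeral)
  also have "\<dots> \<le> 2 * real P * (real d / real c)" using g by (intro mult_left_mono) auto
  also have "\<dots> \<le> 2 * K * real m"
  proof -
    have "real P * real d \<le> real P * (K * real D)" using dK by (intro mult_left_mono) auto
    also have "\<dots> = K * (real P * real D)" by simp
    also have "\<dots> \<le> K * (real m * real c)" using H0 K by (intro mult_left_mono) auto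
    finally have "real P * real d \<le> K * real m * real c" by simp
    then have "real P * real d / real c \<le> K * real m" using cp by (simp add: divide_le_eq)
    then show ?thesis by simp
  qed
  finally show ?thesis .
qed

lemma case_M2:
  fixes cst P m D c d :: nat and K :: real
  assumes cst: "cst \<le> 2 * P" and cd: "c < d"
    and H0: "real P * real D \<le> real m * real c" and dK: "real d \<le> K * real D" and K: "K \<ge> 1"
  shows "real cst \<le> 2 * K * real m"
proof -
  have dp: "real d > 0" using cd by simp
  have "real P * real d \<le> real P * (K * real D)" using dK by (intro mult_left_mono) auto
  also have "\<dots> = K * (real P * real D)" by simp
  also have "\<dots> \<le> K * (real m * real c)" using H0 K by (intro mult_left_mono) auto
  also have "\<dots> \<le> K * (real m * real d)" using cd K by (intro mult_left_mono) auto
  finally have "real P * real d \<le> (K * real m) * real d" by simp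
  then have "real P \<le> K * real m" using dp by simp
  moreover have "real cst \<le> 2 * real P" using cst by simp
  ultimately show ?thesis by linarith
qed

lemma case_IV:
  fixes cst P m D c d p s n :: nat and K :: real
  assumes cst: "cst \<le> (p choose 2) * s" and comb: "p * (p - 1) * (s * (s + 1)) \<le> 12 * (n * (n - 1))"
    and P2: "2 * P = n * (n - 1)"
    and SQ: "real P * real D \<le> real m * (2 * sqrt 2 * sqrt (real c * real D))"
    and cs: "4 * c < (s + 1)^2 * d" and dK: "real d \<le> K * real D" and K: "K \<ge> 1"
    and D: "D \<ge> 1" and c: "c \<ge> 1"
  shows "real cst \<le> 12 * sqrt (2 * K) * real m"
proof -
  define u where "u = real m"
  have u0: "u \<ge> 0" unfolding u_def by simp
  have Dp: "real D > 0" using D by simp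
  have a: "(real P)^2 * real D \<le> 8 * u^2 * real c"
  proof -
    have l0: "0 \<le> real P * real D" by simp
    have "(real P * real D)^2 \<le> (u * (2 * sqrt 2 * sqrt (real c * real D)))^2"
      using SQ l0 unfolding u_def by (intro power_mono) auto
    also have "\<dots> = u^2 * 8 * (real c * real D)"
      by (simp add: power_mult_distrib)
    finally have "(real P)^2 * real D * real D \<le> 8 * u^2 * real c * real D"
      by (simp add: power_mult_distrib power2_eq_square algebra_simps)
    then show ?thesis using Dp by simp
  qed
  have b: "4 * real c \<le> K * real D * (real s + 1)^2"
  proof -
    have "real (4 * c) < real ((s + 1)^2 * d)" using cs by (simp only: of_nat_less_iff)
    then have "4 * real c < (real s + 1)^2 * real d" by (simp add: add.commute)
    also have "\<dots> \<le> (real s + 1)^2 * (K * real D)" using dK by (intro mult_left_mono) auto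
    finally show ?thesis by (simp add: algebra_simps)
  qed
  have c2: "(real P)^2 \<le> 2 * K * u^2 * (real s + 1)^2"
  proof -
    have "(real P)^2 * real D \<le> 8 * u^2 * real c" by (rule a)
    also have "\<dots> = 2 * u^2 * (4 * real c)" by simp
    also have "\<dots> \<le> 2 * u^2 * (K * real D * (real s + 1)^2)" using b by (intro mult_left_mono) auto
    finally have "(real P)^2 * real D \<le> (2 * K * u^2 * (real s + 1)^2) * real D" by (simp add: algebra_simps)
    then show ?thesis using Dp by simp
  qed
  have d: "real P \<le> sqrt (2 * K) * u * (real s + 1)"
  proof -
    have "real P = sqrt ((real P)^2)" by simp
    also have "\<dots> \<le> sqrt (2 * K * u^2 * (real s + 1)^2)" using c2 by (rule real_sqrt_le_mono)
    also have "\<dots> = sqrt (2 * K) * u * (real s + 1)"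
      using u0 K by (simp add: real_sqrt_mult)
    finally show ?thesis .
  qed
  have e: "2 * real cst * (real s + 1) \<le> 24 * real P"
  proof -
    have "2 * (p choose 2) \<le> p * (p - 1)" by (simp add: choose_two)
    then have x: "2 * (p choose 2) * s \<le> p * (p - 1) * s" by (rule mult_le_mono1)
    have y: "2 * cst \<le> 2 * (p choose 2) * s" using cst by (simp add: mult.assoc)
    have "2 * cst \<le> p * (p - 1) * s" using le_trans[OF y x] .
    then have "2 * cst * (s + 1) \<le> p * (p - 1) * s * (s + 1)" by (rule mult_le_mono1)
    also have "\<dots> = p * (p - 1) * (s * (s + 1))" by (simp only: mult.assoc)
    also have "\<dots> \<le> 12 * (n * (n - 1))" by (rule comb)
    also have "\<dots> = 24 * P" using P2 by simp
    finally have "2 * cst * (s + 1) \<le> 24 * P" .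
    then have "real (2 * cst * (s + 1)) \<le> real (24 * P)" by (simp only: of_nat_le_iff)
    moreover have "real (2 * cst * (s + 1)) = 2 * real cst * (real s + 1)" by (simp add: algebra_simps)
    moreover have "real (24 * P) = 24 * real P" by simp
    ultimately show ?thesis by linarith
  qed
  have "2 * real cst * (real s + 1) \<le> (24 * sqrt (2 * K) * u) * (real s + 1)"
    using e d by (simp add: algebra_simps)
  then have "2 * real cst \<le> 24 * sqrt (2 * K) * u" by (simp add: mult_le_cancel_right pos_add_strict)
  then show ?thesis unfolding u_def by (simp add: mult.commute mult.left_commute)
qed

lemma sqrt_lt_sq: "sqrt x < y \<Longrightarrow> x < y^2" for x y :: real
  using real_le_rsqrt[of y x] by linarith

lemma small_M:
  fixes n c d :: nat
  assumes c: "c \<ge> 1" and d: "d \<ge> 1" and n: "n \<ge> 2" and fl: "real d / (2 * real c) < 1"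
  defines "s \<equiv> \<lfloor>sqrt (2 / (real d / (2 * real c)))\<rfloor>"
  defines "M \<equiv> algM n (real d / (2 * real c))"
  shows "(s < 2 \<and> M = 2 \<and> c < d) \<or> (s > int n \<and> M = n) \<or>
         (2 \<le> s \<and> s \<le> int n \<and> M = nat s \<and> 4 * c < (M + 1)^2 * d)"
proof -
  have Mdef: "M = (if s < 2 then 2 else if s > int n then n else nat s)"
    unfolding M_def algM_def s_def Let_def ..
  have q: "2 / (real d / (2 * real c)) = 4 * real c / real d" using c d by (simp add: field_simps)
  have dp: "real d > 0" using d by simp
  consider "s < 2" | "\<not> s < 2" "s > int n" | "\<not> s < 2" "\<not> s > int n" by blast
  then show ?thesis
  proof cases
    case 1
    then have "sqrt (4 * real c / real d) < 2" unfolding s_def q by (simp add: floor_less_iff)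
    then have "4 * real c / real d < 2^2" by (rule sqrt_lt_sq)
    then have "real c < real d" using dp by (simp add: divide_less_eq)
    then show ?thesis using 1 Mdef by simp
  next
    case 2 then show ?thesis using Mdef by simp
  next
    case 3
    then have Ms: "M = nat s" using Mdef by simp
    have s0: "s \<ge> 0" using 3 by simp
    have rM: "real M = real_of_int s" using Ms s0 by simp
    have "sqrt (4 * real c / real d) < real_of_int s + 1" unfolding s_def q by linarith
    then have "4 * real c / real d < (real_of_int s + 1)^2" by (rule sqrt_lt_sq)
    then have "4 * real c < (real M + 1)^2 * real d" unfolding rM using dp by (simp add: divide_less_eq)
    then have "real (4 * c) < real ((M + 1)^2 * d)" by (simp add: add.commute)
    then have "4 * c < (M + 1)^2 * d" by (simp only: of_nat_less_iff)
    then show ?thesis using 3 Ms by simp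
  qed
qed

theorem corollary2:
  fixes n c :: nat and L :: "(nat \<times> nat) list" and K :: real and R :: routing
  assumes "valid_instance n c L"
    and "K \<ge> 1"
    and "quasi_uniform n K L"
    and "d = Max {dem L j k | j k. j \<in> {1..n} \<and> k \<in> {1..n} \<and> j \<noteq> k}"
    and "algA n c d R"
  shows "feasible n c (\<lambda>j k. d) R \<and>
         (\<exists>R'. reduces R' R \<and> feasible n c (dem L) R' \<and> cost n R' \<le> cost n R) \<and>
         real (cost n R) \<le> max (2 * K) (12 * sqrt (2 * K)) * real (min_cost n c L)"
proof -
  note vi = assms(1) and K = assms(2) and qu = assms(3) and dd = assms(4) and A = assms(5)
  have n: "n \<ge> 2" and c: "c \<ge> 1" using vi unfolding valid_instance_def by auto
  define S where "S = {dem L j k | j k. j \<in> {1..n} \<and> k \<in> {1..n} \<and> j \<noteq> k}"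
  have finS: "finite S"
  proof -
    have "S \<subseteq> (\<lambda>(j,k). dem L j k) ` ({1..n} \<times> {1..n})" unfolding S_def by auto
    then show ?thesis by (rule finite_subset) simp
  qed
  have neS: "S \<noteq> {}"
  proof -
    have "dem L 1 2 \<in> S" unfolding S_def using n by force
    then show ?thesis by blast
  qed
  have dS: "d = Max S" unfolding S_def dd ..
  have dmax: "dem L j k \<le> d" if "j \<in> {1..n}" "k \<in> {1..n}" "j \<noteq> k" for j k
  proof -
    have "dem L j k \<in> S" unfolding S_def using that by blast
    then show ?thesis unfolding dS using finS by simp
  qed
  have "d \<in> S" unfolding dS using finS neS by (rule Max_in)
  then obtain j1 k1 where jk1: "d = dem L j1 k1" "j1 \<in> {1..n}" "k1 \<in> {1..n}" "j1 \<noteq> k1"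
    unfolding S_def by blast
  have pos: "dem L j k \<ge> 1" if "j \<in> {1..n}" "k \<in> {1..n}" "j \<noteq> k" for j k
    using qu that unfolding quasi_uniform_def by blast
  have ratio: "real (dem L j k) / real (dem L j' k') \<le> K"
    if "j \<in> {1..n}" "k \<in> {1..n}" "j \<noteq> k" "j' \<in> {1..n}" "k' \<in> {1..n}" "j' \<noteq> k'" for j k j' k'
    using qu that unfolding quasi_uniform_def by blast
  have d1: "d \<ge> 1" using pos jk1 by simp
  have Kp: "K > 0" using K by simp
  have pairs_in: "j \<in> {1..n} \<and> k \<in> {1..n} \<and> j \<noteq> k" if "(j,k) \<in> pairs n" for j k
    using that unfolding pairs_def by auto
  have dK: "real d \<le> K * real (dem L j k)" if "(j,k) \<in> pairs n" for j k
  proof -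
    have r: "real d / real (dem L j k) \<le> K" using ratio[of j1 k1 j k] jk1 pairs_in[OF that] by simp
    have "real (dem L j k) > 0" using pos pairs_in[OF that] by fastforce
    then show ?thesis using r by (simp add: divide_le_eq mult.commute)
  qed
  define D where "D = nat \<lceil>real d / K\<rceil>"
  have dKp: "real d / K > 0" using d1 Kp by simp
  have cz: "\<lceil>real d / K\<rceil> \<ge> 0" using dKp by linarith
  have rD: "real D = real_of_int \<lceil>real d / K\<rceil>" unfolding D_def using cz by simp
  have D_ge: "real d / K \<le> real D" unfolding rD by simp
  have D1: "D \<ge> 1" using D_ge dKp by linarith
  have dKD: "real d \<le> K * real D" using D_ge Kp by (simp add: divide_le_eq mult.commute)
  have D_le: "D \<le> dem L j k" if "(j,k) \<in> pairs n" for j k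
  proof -
    have "real d / K \<le> real (dem L j k)" using dK[OF that] Kp by (simp add: divide_le_eq mult.commute)
    then show ?thesis unfolding D_def by simp
  qed
  define f where "f = real d / (2 * real c)"
  have feas: "feasible n c (\<lambda>j k. d) R"
  proof (cases "f \<ge> 1")
    case True then show ?thesis using algA_big[OF A _ c] unfolding f_def by blast
  next
    case False then show ?thesis using algA_small[OF A _ c d1 n] unfolding f_def by simp
  qed
  have dem_le: "\<forall>(j,k)\<in>pairs n. dem L j k \<le> d" using dmax pairs_in by blast
  obtain R' where R': "reduces R' R" "feasible n c (dem L) R'" "cost n R' \<le> cost n R"
    using reduce[OF feas dem_le] by blast
  define m where "m = min_cost n c L"
  have "\<exists>x R. feasible n c (dem L) R \<and> cost n R = x" using R'(2) by blast
  then have "\<exists>R. feasible n c (dem L) R \<and> cost n R = m"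
    unfolding m_def min_cost_def by (rule LeastI_ex)
  then obtain R0 where R0: "feasible n c (dem L) R0" "cost n R0 = m" by blast
  have D_le': "\<forall>(j,k)\<in>pairs n. D \<le> dem L j k" using D_le by blast
  obtain R1 where R1: "feasible n c (\<lambda>j k. D) R1" "cost n R1 \<le> cost n R0"
    using reduce[OF R0(1) D_le'] by blast
  have posP: "\<forall>(j,k)\<in>pairs n. dem L j k \<ge> 1" using pos pairs_in by blast
  have mge: "n \<le> m" using cost_ge_n[OF R0(1) n posP] R0(2) by simp
  define P where "P = card (pairs n)"
  have P2: "2 * P = n * (n - 1)" unfolding P_def by (rule card_pairs)
  have m1: "real (cost n R1) \<le> real m" using R1(2) R0(2) by simp
  have H0: "real P * real D \<le> real m * real c"
  proof -
    have "real P * real D \<le> real (cost n R1) * real c" unfolding P_def by (rule lb_H0[OF R1(1)])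
    also have "\<dots> \<le> real m * real c" using m1 by (intro mult_right_mono) auto
    finally show ?thesis .
  qed
  have SQ: "real P * real D \<le> real m * (2 * sqrt 2 * sqrt (real c * real D))"
  proof -
    have "real P * real D \<le> real (cost n R1) * (2 * sqrt 2 * sqrt (real c * real D))"
      unfolding P_def by (rule lb_sqrt[OF R1(1) D1 c])
    also have "\<dots> \<le> real m * (2 * sqrt 2 * sqrt (real c * real D))" using m1 by (intro mult_right_mono) auto
    finally show ?thesis .
  qed
  define \<alpha> where "\<alpha> = max (2 * K) (12 * sqrt (2 * K))"
  have a1: "2 * K \<le> \<alpha>" and a2: "12 * sqrt (2 * K) \<le> \<alpha>" unfolding \<alpha>_def by auto
  have a3: "3 \<le> \<alpha>"
  proof -
    have "1 \<le> sqrt (2 * K)" using K by simp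
    then show ?thesis using a2 by linarith
  qed
  have m0: "real m \<ge> 0" by simp
  have bound: "real (cost n R) \<le> \<alpha> * real m"
  proof (cases "f \<ge> 1")
    case True
    have "cost n R \<le> 2 * P * nat \<lceil>real d / (2 * real c)\<rceil>"
      using algA_big[OF A _ c] True unfolding f_def P_def by blast
    then have "real (cost n R) \<le> 2 * K * real m"
      by (rule case_big[OF _ _ c H0 dKD K]) (use True f_def in simp)
    also have "\<dots> \<le> \<alpha> * real m" using a1 m0 by (intro mult_right_mono) auto
    finally show ?thesis .
  next
    case False
    then have fl: "real d / (2 * real c) < 1" unfolding f_def by simp
    define M where "M = algM n (real d / (2 * real c))"
    have cst: "cost n R \<le> (nat \<lceil>real n / real (M div 2)\<rceil> choose 2) * M"
      using algA_small[OF A fl c d1 n] unfolding M_def by blast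
    define s where "s = \<lfloor>sqrt (2 / (real d / (2 * real c)))\<rfloor>"
    have cases: "(s < 2 \<and> M = 2 \<and> c < d) \<or> (s > int n \<and> M = n) \<or>
         (2 \<le> s \<and> s \<le> int n \<and> M = nat s \<and> 4 * c < (M + 1)^2 * d)"
      using small_M[OF c d1 n fl] unfolding s_def M_def by blast
    then consider "s < 2" "M = 2" "c < d" | "s > int n" "M = n"
      | "2 \<le> s" "s \<le> int n" "M = nat s" "4 * c < (M + 1)^2 * d" by blast
    then show ?thesis
    proof cases
      case 1
      have "cost n R \<le> (n choose 2) * 2" using cst 1 by simp
      also have "\<dots> \<le> 2 * P" using P2 by (simp add: choose_two)
      finally have "real (cost n R) \<le> 2 * K * real m"
        by (rule case_M2[OF _ 1(3) H0 dKD K])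
      also have "\<dots> \<le> \<alpha> * real m" using a1 m0 by (intro mult_right_mono) auto
      finally show ?thesis .
    next
      case 2
      define p where "p = nat \<lceil>real n / real (n div 2)\<rceil>"
      have h2: "n div 2 \<ge> 1" using n by simp
      have "real n / real (n div 2) \<le> 3"
      proof -
        have "n \<le> 3 * (n div 2)" using n by linarith
        then have "real n \<le> 3 * real (n div 2)" by linarith
        then show ?thesis using h2 by (simp add: divide_le_eq)
      qed
      then have p3: "p \<le> 3" unfolding p_def by linarith
      have "p * (p - 1) \<le> 3 * 2" using p3 by (intro mult_le_mono) auto
      then have "p * (p - 1) div 2 \<le> 3 * 2 div 2" by (rule div_le_mono)
      then have pc: "p choose 2 \<le> 3" unfolding choose_two by simp
      have "cost n R \<le> (p choose 2) * n" using cst 2 unfolding p_def by simp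
      also have "\<dots> \<le> 3 * n" using pc by simp
      also have "\<dots> \<le> 3 * m" using mge by simp
      finally have "real (cost n R) \<le> 3 * real m" by linarith
      also have "\<dots> \<le> \<alpha> * real m" using a3 m0 by (intro mult_right_mono) auto
      finally show ?thesis .
    next
      case 3
      define ss where "ss = nat s"
      have Mss: "M = ss" using 3 unfolding ss_def by simp
      have s2: "2 \<le> ss" and sn: "ss \<le> n" using 3 unfolding ss_def by auto
      have comb: "nat \<lceil>real n / real (ss div 2)\<rceil> * (nat \<lceil>real n / real (ss div 2)\<rceil> - 1) * (ss * (ss + 1))
          \<le> 12 * (n * (n - 1))" by (rule comb_ineq[OF s2 sn])
      have cst': "cost n R \<le> (nat \<lceil>real n / real (ss div 2)\<rceil> choose 2) * ss" using cst Mss by simp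
      have cs: "4 * c < (ss + 1)^2 * d" using 3 Mss by simp
      have "real (cost n R) \<le> 12 * sqrt (2 * K) * real m"
        by (rule case_IV[OF cst' comb P2 SQ cs dKD K D1 c])
      also have "\<dots> \<le> \<alpha> * real m" using a2 m0 by (intro mult_right_mono) auto
      finally show ?thesis .
    qed
  qed
  show ?thesis using feas R' bound unfolding \<alpha>_def m_def by blast
qed

end
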